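(* Let $A$ be the adjacency matrix of a graph $G=(V,E)$ on $p$ vertices having at least one edge. Let $\vartheta(\overline{G})$ denote the Lovász theta number of the complement $\overline{G}$ of $G$. Then \[ t_{pos}\ge\max\left\{1,\ -\lambda_{min}(A),\ \frac{-p\,\lambda_{min}(A)}{|E|},\ \frac{-p\,\lambda_{min}(A)}{t_{eb}},\ \frac{\lambda_{max}(A)}{\vartheta(\overline{G})-1}\right\}. \]
   Context: $A=(a_{i,j})$ is a self-adjoint $p\times p$ matrix with entries in $\{0,1\}$ and zero diagonal, and $E=\{(i,j): a_{i,j}=1\}$ (ordered pairs), so $G=(V,E)$ is the corresponding simple graph. $\lambda_{min}(A),\lambda_{max}(A)$ are the least and greatest eigenvalues of $A$. $S_A: M_p\to M_p$ is the Schur product map $S_A(X)=(a_{i,j}x_{i,j})$; $tr(X)=\frac1p\mathrm{Tr}(X)$; $\delta(X)=tr(X)I_p$; $\gamma_t=t\delta+S_A$ for real $t$. $t_{pos}=\min\{t:\gamma_t\text{ is a positive map}\}$ and $t_{eb}=\min\{t:\gamma_t\text{ is entanglement breaking}\}$, where $\phi:M_p\to M_p$ is entanglement breaking if $\phi(X)=\sum_k v_kw_k^*Xw_kv_k^*$ for finitely many vectors $w_k,v_k\in\mathbb{C}^p$. The Lovász theta number of $\overline{G}$ may be taken as $\vartheta(\overline{G})=\min\{\lambda_{max}(H): H=H^*\in M_p,\ H_{i,i}=1\ \forall i,\ H_{i,j}=1 \text{ whenever } a_{i,j}=1\}$. *)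

theory Defs
  imports "Jordan_Normal_Form.Schur_Decomposition"
begin

definition self_adjoint :: "complex mat \<Rightarrow> bool" where
  "self_adjoint X \<longleftrightarrow> X = mat_adjoint X"

definition psd :: "complex mat \<Rightarrow> bool" where
  "psd X \<longleftrightarrow> self_adjoint X \<and>
     (\<forall>x \<in> carrier_vec (dim_row X). 0 \<le> Re (conjugate x \<bullet> (X *\<^sub>v x)))"

definition positive_map :: "nat \<Rightarrow> (complex mat \<Rightarrow> complex mat) \<Rightarrow> bool" where
  "positive_map p \<phi> \<longleftrightarrow> (\<forall>X \<in> carrier_mat p p. psd X \<longrightarrow> psd (\<phi> X))"

definition col_mat :: "complex vec \<Rightarrow> complex mat" where
  "col_mat v = mat_of_cols (dim_vec v) [v]"

definition entanglement_breaking :: "nat \<Rightarrow> (complex mat \<Rightarrow> complex mat) \<Rightarrow> bool" where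
  "entanglement_breaking p \<phi> \<longleftrightarrow>
     (\<exists>vw :: (complex vec \<times> complex vec) list.
        (\<forall>(v, w) \<in> set vw. v \<in> carrier_vec p \<and> w \<in> carrier_vec p) \<and>
        (\<forall>X \<in> carrier_mat p p. \<phi> X =
           foldr (\<lambda>M N. M + N) (map (\<lambda>(v, w). col_mat v * mat_adjoint (col_mat w) * X
                                     * col_mat w * mat_adjoint (col_mat v)) vw)
                     (0\<^sub>m p p)))"

definition mtrace :: "complex mat \<Rightarrow> complex" where
  "mtrace X = (\<Sum>i<dim_row X. X $$ (i, i))"

definition ntr :: "nat \<Rightarrow> complex mat \<Rightarrow> complex" where
  "ntr p X = mtrace X / of_nat p"

definition schur_map :: "complex mat \<Rightarrow> complex mat \<Rightarrow> complex mat" where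
  "schur_map A X = mat (dim_row X) (dim_col X) (\<lambda>(i, j). A $$ (i, j) * X $$ (i, j))"

definition delta_map :: "nat \<Rightarrow> complex mat \<Rightarrow> complex mat" where
  "delta_map p X = ntr p X \<cdot>\<^sub>m 1\<^sub>m p"

definition gamma_map :: "nat \<Rightarrow> complex mat \<Rightarrow> real \<Rightarrow> complex mat \<Rightarrow> complex mat" where
  "gamma_map p A t X = complex_of_real t \<cdot>\<^sub>m delta_map p X + schur_map A X"

definition t_pos :: "nat \<Rightarrow> complex mat \<Rightarrow> real" where
  "t_pos p A = Inf {t. positive_map p (gamma_map p A t)}"

definition t_eb :: "nat \<Rightarrow> complex mat \<Rightarrow> real" where
  "t_eb p A = Inf {t. entanglement_breaking p (gamma_map p A t)}"

text \<open>Least / greatest eigenvalue of a self-adjoint matrix (eigenvalues are real).\<close>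
definition lambda_min :: "complex mat \<Rightarrow> real" where
  "lambda_min M = Min (Re ` {c. eigenvalue M c})"

definition lambda_max :: "complex mat \<Rightarrow> real" where
  "lambda_max M = Max (Re ` {c. eigenvalue M c})"

definition adjacency_matrix :: "nat \<Rightarrow> complex mat \<Rightarrow> bool" where
  "adjacency_matrix p A \<longleftrightarrow> A \<in> carrier_mat p p \<and> self_adjoint A \<and>
     (\<forall>i<p. \<forall>j<p. A $$ (i, j) = 0 \<or> A $$ (i, j) = 1) \<and> (\<forall>i<p. A $$ (i, i) = 0)"

text \<open>Edge set E as ordered pairs.\<close>
definition edges :: "nat \<Rightarrow> complex mat \<Rightarrow> (nat \<times> nat) set" where
  "edges p A = {(i, j). i < p \<and> j < p \<and> A $$ (i, j) = 1}"

definition theta_compl :: "nat \<Rightarrow> complex mat \<Rightarrow> real" where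
  "theta_compl p A = Inf {lambda_max H | H. H \<in> carrier_mat p p \<and> self_adjoint H \<and>
      (\<forall>i<p. H $$ (i, i) = 1) \<and> (\<forall>i<p. \<forall>j<p. A $$ (i, j) = 1 \<longrightarrow> H $$ (i, j) = 1)}"

end

theory Submission
  imports Defs
begin


lemma adj_dims[simp]: "dim_row (mat_adjoint X) = dim_col X" "dim_col (mat_adjoint X) = dim_row X"
  unfolding mat_adjoint_def by (auto simp: mat_of_rows_def)

lemma adj_index[simp]: "i < dim_col X \<Longrightarrow> j < dim_row X \<Longrightarrow> mat_adjoint X $$ (i,j) = cnj (X $$ (j,i))"
  unfolding mat_adjoint_def by (simp add: mat_of_rows_def)

lemma self_adjoint_iff: assumes "X \<in> carrier_mat n n"
  shows "self_adjoint X \<longleftrightarrow> (\<forall>i<n. \<forall>j<n. X $$ (i,j) = cnj (X $$ (j,i)))"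
  unfolding self_adjoint_def
proof
  assume e: "X = mat_adjoint X"
  show "\<forall>i<n. \<forall>j<n. X $$ (i,j) = cnj (X $$ (j,i))"
  proof (intro allI impI)
    fix i j assume "i < n" "j < n"
    then have "mat_adjoint X $$ (i,j) = cnj (X $$ (j,i))" using assms by simp
    then show "X $$ (i,j) = cnj (X $$ (j,i))" using e by simp
  qed
next
  assume h: "\<forall>i<n. \<forall>j<n. X $$ (i,j) = cnj (X $$ (j,i))"
  show "X = mat_adjoint X"
  proof (rule eq_matI)
    fix i j assume "i < dim_row (mat_adjoint X)" "j < dim_col (mat_adjoint X)"
    then have "i < n" "j < n" using assms by auto
    then have "mat_adjoint X $$ (i, j) = cnj (X $$ (j,i))" using assms by simp
    then show "X $$ (i, j) = mat_adjoint X $$ (i, j)" using h \<open>i < n\<close> \<open>j < n\<close> by metis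
  qed (use assms in auto)
qed

definition qf :: "complex mat \<Rightarrow> complex vec \<Rightarrow> complex" where
  "qf X z = (\<Sum>i<dim_vec z. \<Sum>j<dim_vec z. cnj (z$i) * X$$(i,j) * z$j)"

lemma qf_eq: assumes "X \<in> carrier_mat n n" "z \<in> carrier_vec n"
  shows "conjugate z \<bullet> (X *\<^sub>v z) = qf X z"
proof -
  have "conjugate z \<bullet> (X *\<^sub>v z) = (\<Sum>i<n. cnj (z$i) * (\<Sum>j<n. X$$(i,j) * z$j))"
    using assms unfolding scalar_prod_def by (simp add: lessThan_atLeast0 row_def scalar_prod_def)
  also have "\<dots> = qf X z" using assms unfolding qf_def
    by (simp add: sum_distrib_left mult.assoc)
  finally show ?thesis .
qed

definition nsq :: "complex vec \<Rightarrow> real" where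
  "nsq z = (\<Sum>i<dim_vec z. (cmod (z$i))^2)"

lemma gamma_carrier: "X \<in> carrier_mat p p \<Longrightarrow> gamma_map p A t X \<in> carrier_mat p p"
  unfolding gamma_map_def delta_map_def schur_map_def by auto

lemma gamma_index: assumes "X \<in> carrier_mat p p" "i < p" "j < p"
  shows "gamma_map p A t X $$ (i,j) = (if i = j then of_real t * ntr p X else 0) + A$$(i,j) * X$$(i,j)"
  using assms unfolding gamma_map_def delta_map_def schur_map_def by auto

lemma psd_iff: assumes "X \<in> carrier_mat p p"
  shows "psd X \<longleftrightarrow> self_adjoint X \<and> (\<forall>z\<in>carrier_vec p. 0 \<le> Re (qf X z))"
  using assms unfolding psd_def by (auto simp: qf_eq)

lemma pos_test: assumes "positive_map p (gamma_map p A s)" "X \<in> carrier_mat p p" "psd X"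
   "y \<in> carrier_vec p"
  shows "0 \<le> Re (qf (gamma_map p A s X) y)"
proof -
  have "psd (gamma_map p A s X)" using assms unfolding positive_map_def by auto
  then show ?thesis using psd_iff[OF gamma_carrier[OF assms(2)]] assms(4) by auto
qed

lemma qf_gamma: assumes "X \<in> carrier_mat p p" "y \<in> carrier_vec p"
  shows "qf (gamma_map p A s X) y = of_real s * ntr p X * (\<Sum>i<p. cnj (y$i) * y$i)
     + (\<Sum>i<p. \<Sum>j<p. cnj (y$i) * (A$$(i,j) * X$$(i,j)) * y$j)"
proof -
  have "qf (gamma_map p A s X) y = (\<Sum>i<p. \<Sum>j<p. (if i = j then cnj (y$i) * (of_real s * ntr p X) * y$j else 0)
     + cnj (y$i) * (A$$(i,j) * X$$(i,j)) * y$j)"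
    unfolding qf_def using assms
    by (intro sum.cong refl) (auto simp: gamma_index ring_distribs)
  also have "\<dots> = (\<Sum>i<p. cnj (y$i) * (of_real s * ntr p X) * y$i) + (\<Sum>i<p. \<Sum>j<p. cnj (y$i) * (A$$(i,j) * X$$(i,j)) * y$j)"
    by (simp add: sum.distrib sum.delta)
  also have "(\<Sum>i<p. cnj (y$i) * (of_real s * ntr p X) * y$i) = of_real s * ntr p X * (\<Sum>i<p. cnj (y$i) * y$i)"
    by (simp add: sum_distrib_left algebra_simps)
  finally show ?thesis .
qed

definition outer :: "complex vec \<Rightarrow> complex mat" where
  "outer v = mat (dim_vec v) (dim_vec v) (\<lambda>(i,j). v$i * cnj (v$j))"

lemma outer_carrier: "v \<in> carrier_vec p \<Longrightarrow> outer v \<in> carrier_mat p p"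
  unfolding outer_def by auto

lemma outer_psd: assumes "v \<in> carrier_vec p" shows "psd (outer v)"
proof -
  have c: "outer v \<in> carrier_mat p p" using assms by (rule outer_carrier)
  have sa: "self_adjoint (outer v)"
    using assms by (subst self_adjoint_iff[OF c]) (auto simp: outer_def)
  have "0 \<le> Re (qf (outer v) z)" if z: "z \<in> carrier_vec p" for z
  proof -
    define S where "S = (\<Sum>i<p. cnj (z$i) * v$i)"
    have "qf (outer v) z = (\<Sum>i<p. \<Sum>j<p. (cnj (z$i) * v$i) * cnj (cnj (z$j) * v$j))"
      using assms z unfolding qf_def outer_def by (auto simp: algebra_simps intro!: sum.cong)
    also have "\<dots> = S * cnj S" unfolding S_def
      by (simp add: sum_distrib_left sum_distrib_right) (subst sum.swap, simp add: algebra_simps)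
    finally have "qf (outer v) z = S * cnj S" .
    then show ?thesis by (simp add: complex_mult_cnj)
  qed
  then show ?thesis using sa c by (simp add: psd_iff)
qed

lemma ntr_outer: assumes "v \<in> carrier_vec p"
  shows "ntr p (outer v) = (\<Sum>i<p. v$i * cnj (v$i)) / of_nat p"
  using assms unfolding ntr_def mtrace_def outer_def by auto

lemma col_mat_carrier: "v \<in> carrier_vec p \<Longrightarrow> col_mat v \<in> carrier_mat p 1"
  unfolding col_mat_def by auto

lemma col_mat_index: "i < dim_vec v \<Longrightarrow> col_mat v $$ (i,0) = v$i"
  unfolding col_mat_def by (simp add: mat_of_cols_index)

lemma eb_term: assumes v: "v \<in> carrier_vec p" and w: "w \<in> carrier_vec p" and X: "X \<in> carrier_mat p p"
  shows "col_mat v * mat_adjoint (col_mat w) * X * col_mat w * mat_adjoint (col_mat v) \<in> carrier_mat p p"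
    and "l < p \<Longrightarrow> m < p \<Longrightarrow>
     (col_mat v * mat_adjoint (col_mat w) * X * col_mat w * mat_adjoint (col_mat v)) $$ (l,m)
     = v$l * qf X w * cnj (v$m)"
proof -
  have cv: "col_mat v \<in> carrier_mat p 1" and cw: "col_mat w \<in> carrier_mat p 1"
    using v w col_mat_carrier by auto
  have dv[simp]: "dim_vec v = p" "dim_vec w = p" using v w by auto
  have e1: "(col_mat v * mat_adjoint (col_mat w)) $$ (l,b) = v$l * cnj (w$b)" if "l < p" "b < p" for l b
    using that cv cw v w by (simp add: scalar_prod_def row_def col_def col_mat_index)
  have e2: "(col_mat v * mat_adjoint (col_mat w) * X) $$ (l,c) = v$l * (\<Sum>b<p. cnj (w$b) * X$$(b,c))" if "l < p" "c < p" for l c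
  proof -
    have "(col_mat v * mat_adjoint (col_mat w) * X) $$ (l,c) = (\<Sum>b<p. (col_mat v * mat_adjoint (col_mat w)) $$ (l,b) * X$$(b,c))"
      using that cv cw X by (simp add: scalar_prod_def lessThan_atLeast0)
    also have "\<dots> = v$l * (\<Sum>b<p. cnj (w$b) * X$$(b,c))"
      using that by (simp add: e1 sum_distrib_left mult.assoc)
    finally show ?thesis .
  qed
  have e3: "(col_mat v * mat_adjoint (col_mat w) * X * col_mat w) $$ (l,0) = v$l * qf X w" if "l < p" for l
  proof -
    have "(col_mat v * mat_adjoint (col_mat w) * X * col_mat w) $$ (l,0) = (\<Sum>c<p. (col_mat v * mat_adjoint (col_mat w) * X) $$ (l,c) * w$c)"
      using that cv cw X by (simp add: scalar_prod_def lessThan_atLeast0 col_mat_index)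
    also have "\<dots> = v$l * qf X w"
      using that by (simp add: e2 qf_def sum_distrib_left sum_distrib_right mult.assoc) (subst sum.swap, simp add: algebra_simps)
    finally show ?thesis .
  qed
  show "col_mat v * mat_adjoint (col_mat w) * X * col_mat w * mat_adjoint (col_mat v) \<in> carrier_mat p p"
    using cv cw X by auto
  show "l < p \<Longrightarrow> m < p \<Longrightarrow>
     (col_mat v * mat_adjoint (col_mat w) * X * col_mat w * mat_adjoint (col_mat v)) $$ (l,m)
     = v$l * qf X w * cnj (v$m)"
  proof -
    assume lm: "l < p" "m < p"
    have "(col_mat v * mat_adjoint (col_mat w) * X * col_mat w * mat_adjoint (col_mat v)) $$ (l,m)
       = (col_mat v * mat_adjoint (col_mat w) * X * col_mat w) $$ (l,0) * cnj (v$m)"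
      using lm cv cw X by (simp add: scalar_prod_def col_mat_index)
    then show ?thesis using e3[OF lm(1)] by simp
  qed
qed

lemma foldr_index: assumes "\<forall>x\<in>set xs. f x \<in> carrier_mat p p"
  shows "foldr (+) (map f xs) (0\<^sub>m p p) \<in> carrier_mat p p"
    and "l < p \<Longrightarrow> m < p \<Longrightarrow> foldr (+) (map f xs) (0\<^sub>m p p) $$ (l,m) = (\<Sum>x\<leftarrow>xs. f x $$ (l,m))"
  using assms by (induction xs) auto



lemma nsq_nonneg: "0 \<le> nsq z" unfolding nsq_def by (auto intro: sum_nonneg)

lemma cmod_sq_le_nsq: "i < dim_vec z \<Longrightarrow> (cmod (z$i))^2 \<le> nsq z"
  unfolding nsq_def by (rule member_le_sum) auto

lemma cmod_le_sqrt_nsq: "i < dim_vec z \<Longrightarrow> cmod (z$i) \<le> sqrt (nsq z)"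
  using cmod_sq_le_nsq real_le_rsqrt by blast

lemma cmod_mult_le_nsq: "i < dim_vec z \<Longrightarrow> j < dim_vec z \<Longrightarrow> cmod (z$i) * cmod (z$j) \<le> nsq z"
proof -
  assume "i < dim_vec z" "j < dim_vec z"
  then have "cmod (z$i) \<le> sqrt (nsq z)" "cmod (z$j) \<le> sqrt (nsq z)" by (auto intro: cmod_le_sqrt_nsq)
  then have "cmod (z$i) * cmod (z$j) \<le> sqrt (nsq z) * sqrt (nsq z)"
    using nsq_nonneg by (intro mult_mono) auto
  then show ?thesis using nsq_nonneg by simp
qed

lemma sum_cnj_nsq': "(\<Sum>i<dim_vec z. z$i * cnj (z$i)) = of_real (nsq z)"
  unfolding nsq_def of_real_sum by (rule sum.cong) (auto simp: complex_norm_square[symmetric])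

lemma sum_cnj_nsq: "(\<Sum>i<dim_vec z. cnj (z$i) * z$i) = of_real (nsq z)"
  using sum_cnj_nsq' by (simp add: mult.commute)

definition mbound :: "complex mat \<Rightarrow> real" where
  "mbound X = (\<Sum>i<dim_row X. \<Sum>j<dim_col X. cmod (X$$(i,j)))"

lemma mbound_nonneg: "0 \<le> mbound X" unfolding mbound_def by (auto intro!: sum_nonneg)

lemma qf_bound: assumes "X \<in> carrier_mat n n" "z \<in> carrier_vec n"
  shows "cmod (qf X z) \<le> mbound X * nsq z"
proof -
  have "cmod (qf X z) \<le> (\<Sum>i<n. \<Sum>j<n. cmod (cnj (z$i) * X$$(i,j) * z$j))"
    unfolding qf_def using assms
    by (auto intro!: order_trans[OF norm_sum] sum_mono simp del: norm_mult)
  also have "\<dots> \<le> (\<Sum>i<n. \<Sum>j<n. cmod (X$$(i,j)) * nsq z)"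
  proof (intro sum_mono)
    fix i j assume "i \<in> {..<n}" "j \<in> {..<n}"
    then have "cmod (z$i) * cmod (z$j) \<le> nsq z" using assms cmod_mult_le_nsq by auto
    then have "cmod (X$$(i,j)) * (cmod (z$i) * cmod (z$j)) \<le> cmod (X$$(i,j)) * nsq z"
      by (intro mult_left_mono) auto
    then show "cmod (cnj (z$i) * X$$(i,j) * z$j) \<le> cmod (X$$(i,j)) * nsq z"
      by (simp add: norm_mult algebra_simps)
  qed
  also have "\<dots> = mbound X * nsq z" using assms unfolding mbound_def by (simp add: sum_distrib_right)
  finally show ?thesis .
qed

lemma matvec_bound: assumes "L \<in> carrier_mat n n" "w \<in> carrier_vec n"
  shows "nsq (L *\<^sub>v w) \<le> (\<Sum>i<n. (\<Sum>j<n. cmod (L$$(i,j)))^2) * nsq w"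
proof -
  have "(cmod ((L *\<^sub>v w)$i))^2 \<le> (\<Sum>j<n. cmod (L$$(i,j)))^2 * nsq w" if i: "i < n" for i
  proof -
    have "(L *\<^sub>v w)$i = (\<Sum>j<n. L$$(i,j) * w$j)"
      using assms i by (simp add: scalar_prod_def row_def lessThan_atLeast0)
    then have "cmod ((L *\<^sub>v w)$i) \<le> (\<Sum>j<n. cmod (L$$(i,j)) * cmod (w$j))"
      by (auto intro!: order_trans[OF norm_sum] simp: norm_mult)
    also have "\<dots> \<le> (\<Sum>j<n. cmod (L$$(i,j)) * sqrt (nsq w))"
      using assms by (intro sum_mono mult_left_mono cmod_le_sqrt_nsq) auto
    finally have h: "cmod ((L *\<^sub>v w)$i) \<le> (\<Sum>j<n. cmod (L$$(i,j))) * sqrt (nsq w)"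
      by (simp add: sum_distrib_right)
    have "(cmod ((L *\<^sub>v w)$i))^2 \<le> ((\<Sum>j<n. cmod (L$$(i,j))) * sqrt (nsq w))^2"
      using h by (intro power_mono) auto
    then show ?thesis using nsq_nonneg by (simp add: power_mult_distrib)
  qed
  then have "nsq (L *\<^sub>v w) \<le> (\<Sum>i<n. (\<Sum>j<n. cmod (L$$(i,j)))^2 * nsq w)"
    unfolding nsq_def using assms by (auto intro!: sum_mono)
  then show ?thesis by (simp add: sum_distrib_right)
qed

lemma qf_diff: assumes "X \<in> carrier_mat n n" "z \<in> carrier_vec n" "w \<in> carrier_vec n"
  shows "qf X (vec n (\<lambda>i. z$i - of_real r * w$i)) = qf X z
     - of_real r * (\<Sum>i<n. \<Sum>j<n. cnj (z$i) * X$$(i,j) * w$j)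
     - of_real r * (\<Sum>i<n. \<Sum>j<n. cnj (w$i) * X$$(i,j) * z$j)
     + of_real r * of_real r * qf X w"
proof -
  have "qf X (vec n (\<lambda>i. z$i - of_real r * w$i)) = (\<Sum>i<n. \<Sum>j<n.
      cnj (z$i) * X$$(i,j) * z$j - of_real r * (cnj (z$i) * X$$(i,j) * w$j)
      - of_real r * (cnj (w$i) * X$$(i,j) * z$j) + of_real r * of_real r * (cnj (w$i) * X$$(i,j) * w$j))"
    unfolding qf_def by (intro sum.cong) (auto simp: algebra_simps)
  then show ?thesis using assms unfolding qf_def
    by (simp add: sum.distrib sum_subtractf sum_distrib_left)
qed

lemma psd_kernel: assumes K: "K \<in> carrier_mat n n"
  and herm: "\<forall>i<n. \<forall>j<n. K$$(i,j) = cnj (K$$(j,i))"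
  and pos: "\<forall>z\<in>carrier_vec n. 0 \<le> Re (qf K z)"
  and z: "z \<in> carrier_vec n"
  shows "nsq (K *\<^sub>v z) \<le> (1 + mbound K) * Re (qf K z)"
proof -
  define w where "w = K *\<^sub>v z"
  have w: "w \<in> carrier_vec n" unfolding w_def using K z by (rule mult_mat_vec_carrier)
  have wi: "w$i = (\<Sum>j<n. K$$(i,j) * z$j)" if "i < n" for i
    unfolding w_def using K z that by (simp add: scalar_prod_def row_def lessThan_atLeast0)
  have S2: "(\<Sum>i<n. \<Sum>j<n. cnj (w$i) * K$$(i,j) * z$j) = of_real (nsq w)"
  proof -
    have "(\<Sum>i<n. \<Sum>j<n. cnj (w$i) * K$$(i,j) * z$j) = (\<Sum>i<n. cnj (w$i) * w$i)"
      by (intro sum.cong) (auto simp: wi sum_distrib_left mult.assoc)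
    then show ?thesis using sum_cnj_nsq[of w] w by simp
  qed
  have S1: "(\<Sum>i<n. \<Sum>j<n. cnj (z$i) * K$$(i,j) * w$j) = of_real (nsq w)"
  proof -
    have "(\<Sum>i<n. \<Sum>j<n. cnj (z$i) * K$$(i,j) * w$j) = (\<Sum>j<n. \<Sum>i<n. cnj (z$i) * K$$(i,j) * w$j)"
      by (rule sum.swap)
    also have "\<dots> = (\<Sum>j<n. cnj (w$j) * w$j)"
    proof (intro sum.cong refl)
      fix j assume j: "j \<in> {..<n}"
      have "(\<Sum>i<n. cnj (z$i) * K$$(i,j)) = cnj (\<Sum>i<n. K$$(j,i) * z$i)"
      proof -
        have "cnj (z$i) * K$$(i,j) = cnj (K$$(j,i) * z$i)" if "i \<in> {..<n}" for i
        proof -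
          have "K$$(i,j) = cnj (K$$(j,i))" using herm that j by blast
          then show ?thesis by (metis complex_cnj_mult mult.commute)
        qed
        then have "(\<Sum>i<n. cnj (z$i) * K$$(i,j)) = (\<Sum>i<n. cnj (K$$(j,i) * z$i))"
          by (meson sum.cong)
        then show ?thesis by (simp only: cnj_sum)
      qed
      then have "(\<Sum>i<n. cnj (z$i) * K$$(i,j)) = cnj (w$j)" using wi j by simp
      then show "(\<Sum>i<n. cnj (z$i) * K$$(i,j) * w$j) = cnj (w$j) * w$j"
        by (simp add: sum_distrib_right[symmetric])
    qed
    finally show ?thesis using sum_cnj_nsq[of w] w by simp
  qed
  define M where "M = 1 + mbound K"
  have M: "M \<ge> 1" unfolding M_def using mbound_nonneg by auto
  define r where "r = 1 / M"
  have "0 \<le> Re (qf K (vec n (\<lambda>i. z$i - of_real r * w$i)))" using pos by auto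
  also have "qf K (vec n (\<lambda>i. z$i - of_real r * w$i)) = qf K z - of_real r * of_real (nsq w)
     - of_real r * of_real (nsq w) + of_real r * of_real r * qf K w"
    using qf_diff[OF K z w, of r] S1 S2 by simp
  finally have h1: "0 \<le> Re (qf K z) - 2 * r * nsq w + r * r * Re (qf K w)" by simp
  have "Re (qf K w) \<le> cmod (qf K w)" by (rule complex_Re_le_cmod)
  also have "\<dots> \<le> mbound K * nsq w" by (rule qf_bound[OF K w])
  also have "\<dots> \<le> M * nsq w" unfolding M_def using nsq_nonneg by (simp add: algebra_simps)
  finally have h2: "Re (qf K w) \<le> M * nsq w" .
  have "r * r * Re (qf K w) \<le> r * r * (M * nsq w)"
    using h2 by (intro mult_left_mono) auto
  also have "r * r * (M * nsq w) = r * nsq w" unfolding r_def using M by (simp add: field_simps power2_eq_square)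
  finally have "0 \<le> Re (qf K z) - r * nsq w" using h1 by linarith
  then have "r * nsq w \<le> Re (qf K z)" by simp
  then have "M * (r * nsq w) \<le> M * Re (qf K z)" using M by (intro mult_left_mono) auto
  then show ?thesis unfolding r_def M_def[symmetric] w_def[symmetric] using M by simp
qed

lemma qf_smult: "qf X (c \<cdot>\<^sub>v z) = cnj c * c * qf X z"
  unfolding qf_def smult_vec_def by (simp add: sum_distrib_left algebra_simps)

lemma nsq_smult: "nsq (c \<cdot>\<^sub>v z) = (cmod c)^2 * nsq z"
  unfolding nsq_def smult_vec_def by (simp add: sum_distrib_left norm_mult power_mult_distrib)

lemma nsq_zero_qf: assumes "nsq z = 0" shows "qf X z = 0"
proof -
  have "\<forall>i\<in>{..<dim_vec z}. (cmod (z$i))^2 = 0"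
    using assms unfolding nsq_def by (subst sum_nonneg_eq_0_iff[symmetric]) auto
  then have "\<forall>i<dim_vec z. z$i = 0" by auto
  then show ?thesis unfolding qf_def by auto
qed

lemma qf_shift: assumes "H \<in> carrier_mat n n" "z \<in> carrier_vec n"
  shows "qf (c \<cdot>\<^sub>m 1\<^sub>m n - H) z = c * of_real (nsq z) - qf H z"
proof -
  have "qf (c \<cdot>\<^sub>m 1\<^sub>m n - H) z = (\<Sum>i<n. \<Sum>j<n. (if i = j then c * (cnj (z$i) * z$j) else 0) - cnj (z$i) * H$$(i,j) * z$j)"
    unfolding qf_def using assms by (intro sum.cong) (auto simp: algebra_simps)
  also have "\<dots> = c * (\<Sum>i<n. cnj (z$i) * z$i) - qf H z"
    using assms unfolding qf_def by (simp add: sum_subtractf sum.delta sum_distrib_left)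
  finally show ?thesis using sum_cnj_nsq[of z] assms by simp
qed

lemma nsq_unit: "i < n \<Longrightarrow> nsq (unit_vec n i) = 1"
proof -
  assume i: "i < n"
  have "nsq (unit_vec n i) = (\<Sum>ia<n. if ia = i then 1 else 0)"
    unfolding nsq_def by (rule sum.cong) (auto simp: unit_vec_def)
  then show ?thesis using i by simp
qed

lemma rayleigh: assumes H: "H \<in> carrier_mat n n"
  and herm: "\<forall>i<n. \<forall>j<n. H$$(i,j) = cnj (H$$(j,i))" and n: "0 < n"
  shows "\<exists>\<mu>. eigenvalue H (of_real \<mu>) \<and> (\<forall>z\<in>carrier_vec n. Re (qf H z) \<le> \<mu> * nsq z)"
proof -
  define R where "R = {Re (qf H z) | z. z \<in> carrier_vec n \<and> nsq z = 1}"
  have e0: "unit_vec n 0 \<in> carrier_vec n" "nsq (unit_vec n 0) = (1::real)"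
    using n by (auto simp: nsq_unit)
  have Rne: "R \<noteq> {}" unfolding R_def using e0 by blast
  have Rbd: "bdd_above R"
  proof
    fix x assume "x \<in> R"
    then obtain z where z: "z \<in> carrier_vec n" "nsq z = 1" and x: "x = Re (qf H z)" unfolding R_def by blast
    have "x \<le> cmod (qf H z)" unfolding x by (rule complex_Re_le_cmod)
    also have "\<dots> \<le> mbound H * nsq z" by (rule qf_bound[OF H z(1)])
    finally show "x \<le> mbound H" using z by simp
  qed
  define \<mu> where "\<mu> = Sup R"
  have ray: "Re (qf H z) \<le> \<mu> * nsq z" if z: "z \<in> carrier_vec n" for z
  proof (cases "nsq z = 0")
    case True then show ?thesis by (simp add: nsq_zero_qf)
  next
    case False
    then have N: "nsq z > 0" using nsq_nonneg[of z] by linarith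
    define c where "c = complex_of_real (1 / sqrt (nsq z))"
    have "cmod c = 1 / sqrt (nsq z)" unfolding c_def using nsq_nonneg[of z] by (simp only: norm_of_real) simp
    then have "nsq (c \<cdot>\<^sub>v z) = 1" unfolding nsq_smult using N
      by (simp add: power_divide)
    moreover have "c \<cdot>\<^sub>v z \<in> carrier_vec n" using z by simp
    ultimately have "Re (qf H (c \<cdot>\<^sub>v z)) \<in> R" unfolding R_def by blast
    then have "Re (qf H (c \<cdot>\<^sub>v z)) \<le> \<mu>" unfolding \<mu>_def using Rbd by (rule cSup_upper)
    moreover have "cnj c * c = of_real (1 / nsq z)" unfolding c_def using N
      by (simp add: power2_eq_square[symmetric] power_divide del: of_real_divide flip: of_real_power)
    ultimately have "Re (qf H z) / nsq z \<le> \<mu>" unfolding qf_smult by simp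
    then show ?thesis using N by (simp add: divide_le_eq mult.commute)
  qed
  have "eigenvalue H (of_real \<mu>)"
  proof (rule ccontr)
    assume ne: "\<not> eigenvalue H (of_real \<mu>)"
    define D where "D = char_matrix H (of_real \<mu>)"
    have dD: "det D \<noteq> 0" using ne eigenvalue_det[OF H] unfolding D_def by simp
    have D: "D \<in> carrier_mat n n" unfolding D_def using H by simp
    define K where "K = (of_real \<mu>) \<cdot>\<^sub>m 1\<^sub>m n - H"
    have K: "K \<in> carrier_mat n n" unfolding K_def using H by (rule minus_carrier_mat)
    have KD: "K = (-1) \<cdot>\<^sub>m D"
      unfolding K_def D_def char_matrix_def using H by (intro eq_matI) auto
    define L where "L = (- 1 / det D) \<cdot>\<^sub>m adj_mat D"
    have L: "L \<in> carrier_mat n n" unfolding L_def using adj_mat(1)[OF D] by simp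
    have LK: "L * K = 1\<^sub>m n"
    proof -
      have "L * K = (- 1 / det D) \<cdot>\<^sub>m (adj_mat D * ((-1) \<cdot>\<^sub>m D))"
        unfolding L_def KD using adj_mat(1)[OF D] D by (intro mult_smult_assoc_mat) auto
      also have "\<dots> = (- 1 / det D) \<cdot>\<^sub>m ((-1) \<cdot>\<^sub>m (det D \<cdot>\<^sub>m 1\<^sub>m n))"
        using adj_mat[OF D] D by (simp add: mult_smult_distrib)
      also have "\<dots> = 1\<^sub>m n" using dD by (intro eq_matI) auto
      finally show ?thesis .
    qed
    have hermK: "\<forall>i<n. \<forall>j<n. K$$(i,j) = cnj (K$$(j,i))"
    proof (intro allI impI)
      fix i j assume ij: "i < n" "j < n"
      have "H$$(i,j) = cnj (H$$(j,i))" using herm ij by blast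
      then show "K$$(i,j) = cnj (K$$(j,i))" unfolding K_def using H ij by auto
    qed
    have qK: "Re (qf K z) = \<mu> * nsq z - Re (qf H z)" if "z \<in> carrier_vec n" for z
      unfolding K_def qf_shift[OF H that] by simp
    have posK: "\<forall>z\<in>carrier_vec n. 0 \<le> Re (qf K z)" using ray qK by auto
    define CL where "CL = (\<Sum>i<n. (\<Sum>j<n. cmod (L$$(i,j)))^2)"
    define M where "M = 1 + mbound K"
    have CL0: "CL \<ge> 0" unfolding CL_def by (auto intro: sum_nonneg)
    have M0: "M \<ge> 1" unfolding M_def using mbound_nonneg by auto
    have key: "1 \<le> CL * M * (\<mu> - Re (qf H z))" if z: "z \<in> carrier_vec n" "nsq z = 1" for z
    proof -
      have "z = L *\<^sub>v (K *\<^sub>v z)" using LK L K z by (metis assoc_mult_mat_vec one_mult_mat_vec)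
      then have "nsq z = nsq (L *\<^sub>v (K *\<^sub>v z))" by simp
      also have "\<dots> \<le> CL * nsq (K *\<^sub>v z)" unfolding CL_def
        using L K z by (intro matvec_bound) auto
      also have "\<dots> \<le> CL * (M * Re (qf K z))" unfolding M_def
        using psd_kernel[OF K hermK posK z(1)] CL0 by (intro mult_left_mono) auto
      finally show ?thesis using z qK by (simp add: mult.assoc)
    qed
    have "CL * M > 0"
    proof -
      have "1 \<le> CL * M * (\<mu> - Re (qf H (unit_vec n 0)))" using key e0 by blast
      then have "CL * M \<noteq> 0" by auto
      then show ?thesis using CL0 M0 by (simp add: less_le)
    qed
    have "\<forall>x\<in>R. x \<le> \<mu> - 1 / (CL * M)"
    proof
      fix x assume "x \<in> R"
      then obtain z where z: "z \<in> carrier_vec n" "nsq z = 1" and x: "x = Re (qf H z)" unfolding R_def by blast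
      have "1 \<le> (CL * M) * (\<mu> - x)" using key[OF z] x by simp
      then have "1 / (CL * M) \<le> \<mu> - x" using \<open>CL * M > 0\<close> by (simp add: divide_le_eq mult.commute)
      then show "x \<le> \<mu> - 1 / (CL * M)" by simp
    qed
    then have "\<mu> \<le> \<mu> - 1 / (CL * M)" unfolding \<mu>_def using Rne by (intro cSup_least) (auto simp: \<mu>_def)
    then show False using \<open>CL * M > 0\<close> by (simp add: field_simps)
  qed
  then show ?thesis using ray by blast
qed



lemma eig_finite: fixes H :: "complex mat" assumes H: "H \<in> carrier_mat n n" shows "finite {c. eigenvalue H c}"
proof -
  have "monic (char_poly H)" using degree_monic_char_poly[OF H] by auto
  then have "char_poly H \<noteq> 0" by auto
  then have "finite {c. poly (char_poly H) c = 0}" by (rule poly_roots_finite)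
  then show ?thesis using eigenvalue_root_char_poly[OF H] by simp
qed

lemma lambda_max_props: assumes H: "H \<in> carrier_mat n n"
  and herm: "\<forall>i<n. \<forall>j<n. H$$(i,j) = cnj (H$$(j,i))" and n: "0 < n"
  shows "\<exists>c. eigenvalue H c \<and> Re c = lambda_max H"
    and "\<forall>z\<in>carrier_vec n. Re (qf H z) \<le> lambda_max H * nsq z"
proof -
  obtain \<mu> where mu: "eigenvalue H (of_real \<mu>)" "\<forall>z\<in>carrier_vec n. Re (qf H z) \<le> \<mu> * nsq z"
    using rayleigh[OF H herm n] by blast
  have fin: "finite (Re ` {c. eigenvalue H c})" using eig_finite[OF H] by simp
  have mem: "\<mu> \<in> Re ` {c. eigenvalue H c}" using mu(1) by (force intro: image_eqI[of _ _ "of_real \<mu>"])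
  then have ne: "Re ` {c. eigenvalue H c} \<noteq> {}" by auto
  have "\<mu> \<le> lambda_max H" unfolding lambda_max_def using fin mem by simp
  then show "\<forall>z\<in>carrier_vec n. Re (qf H z) \<le> lambda_max H * nsq z"
    using mu(2) nsq_nonneg by (meson mult_right_mono order_trans)
  have "lambda_max H \<in> Re ` {c. eigenvalue H c}" unfolding lambda_max_def using fin ne by (rule Max_in)
  then show "\<exists>c. eigenvalue H c \<and> Re c = lambda_max H" by auto
qed

lemma lambda_min_props: assumes H: "H \<in> carrier_mat n n"
  and herm: "\<forall>i<n. \<forall>j<n. H$$(i,j) = cnj (H$$(j,i))" and n: "0 < n"
  shows "\<exists>c. eigenvalue H c \<and> Re c = lambda_min H"
proof -
  obtain \<mu> where mu: "eigenvalue H (of_real \<mu>)"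
    using rayleigh[OF H herm n] by blast
  have fin: "finite (Re ` {c. eigenvalue H c})" using eig_finite[OF H] by simp
  have mem: "\<mu> \<in> Re ` {c. eigenvalue H c}" using mu(1) by (force intro: image_eqI[of _ _ "of_real \<mu>"])
  then have ne: "Re ` {c. eigenvalue H c} \<noteq> {}" by auto
  have "lambda_min H \<in> Re ` {c. eigenvalue H c}" unfolding lambda_min_def using fin ne by (rule Min_in)
  then show "\<exists>c. eigenvalue H c \<and> Re c = lambda_min H" by auto
qed

lemma nsq_pos: assumes "u \<in> carrier_vec n" "u \<noteq> 0\<^sub>v n" shows "nsq u > 0"
proof (rule ccontr)
  assume "\<not> nsq u > 0"
  then have "nsq u = 0" using nsq_nonneg[of u] by linarith
  then have "\<forall>i\<in>{..<dim_vec u}. (cmod (u$i))^2 = 0"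
    unfolding nsq_def by (subst sum_nonneg_eq_0_iff[symmetric]) auto
  then have "u = 0\<^sub>v n" using assms(1) by (intro eq_vecI) auto
  then show False using assms(2) by simp
qed

lemma eig_vec: assumes H: "H \<in> carrier_mat n n" and e: "eigenvalue H c"
  shows "\<exists>u. u \<in> carrier_vec n \<and> nsq u > 0 \<and> (\<forall>i<n. (\<Sum>j<n. H$$(i,j) * u$j) = c * u$i)"
proof -
  obtain u where u: "u \<in> carrier_vec n" "u \<noteq> 0\<^sub>v n" "H *\<^sub>v u = c \<cdot>\<^sub>v u"
    using e H unfolding eigenvalue_def eigenvector_def by auto
  have "(\<Sum>j<n. H$$(i,j) * u$j) = c * u$i" if i: "i < n" for i
  proof -
    have "(H *\<^sub>v u) $ i = (\<Sum>j<n. H$$(i,j) * u$j)"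
      using H u(1) i by (simp add: scalar_prod_def row_def lessThan_atLeast0)
    then show ?thesis using u(3) u(1) i by simp
  qed
  then show ?thesis using u nsq_pos by blast
qed

lemma qf_eig: assumes u: "u \<in> carrier_vec n" and ev: "\<forall>i<n. (\<Sum>j<n. H$$(i,j) * u$j) = c * u$i"
  shows "qf H u = c * of_real (nsq u)"
proof -
  have "qf H u = (\<Sum>i<n. cnj (u$i) * (\<Sum>j<n. H$$(i,j) * u$j))"
    unfolding qf_def using u by (simp add: sum_distrib_left mult.assoc)
  also have "\<dots> = (\<Sum>i<n. c * (cnj (u$i) * u$i))" using ev by (auto intro!: sum.cong)
  also have "\<dots> = c * of_real (nsq u)" using sum_cnj_nsq[of u] u by (simp add: sum_distrib_left[symmetric])
  finally show ?thesis .
qed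



lemma sum2: fixes p :: nat assumes "i \<noteq> j" "i < p" "j < p" "\<forall>k<p. k \<noteq> i \<longrightarrow> k \<noteq> j \<longrightarrow> F k = 0"
  shows "(\<Sum>k<p. F k) = F i + F j"
proof -
  have "(\<Sum>k<p. F k) = (\<Sum>k\<in>{i,j}. F k)"
    by (rule sum.mono_neutral_cong_right) (use assms in auto)
  then show ?thesis using assms(1) by simp
qed

lemma sum_list_product: fixes F :: "nat \<times> nat \<Rightarrow> 'a::comm_monoid_add" shows "sum_list (map F (List.product [0..<p] [0..<q])) = (\<Sum>i<p. \<Sum>j<q. F (i,j))"
proof -
  have "sum_list (map F (List.product xs ys)) = sum_list (map (\<lambda>x. sum_list (map (\<lambda>y. F (x,y)) ys)) xs)" for xs ys
    by (induction xs) (auto simp: comp_def)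
  moreover have "sum_list (map g [0..<n]) = (\<Sum>i<n. g i)" for g :: "nat \<Rightarrow> 'a" and n
    by (simp add: sum_set_upt_conv_sum_list_nat[symmetric] lessThan_atLeast0)
  ultimately show ?thesis by simp
qed

definition wv :: "nat \<Rightarrow> nat \<Rightarrow> nat \<Rightarrow> complex \<Rightarrow> complex vec" where
  "wv p i j c = vec p (\<lambda>k. if k = i then 1 else if k = j then c else 0)"

lemma wv_carrier: "wv p i j c \<in> carrier_vec p" unfolding wv_def by simp

lemma wv_index: "k < p \<Longrightarrow> wv p i j c $ k = (if k = i then 1 else if k = j then c else 0)"
  unfolding wv_def by simp

lemma qf_wv: assumes ij: "i \<noteq> j" "i < p" "j < p" and X: "X \<in> carrier_mat p p"
  shows "qf X (wv p i j c) = X$$(i,i) + c * X$$(i,j) + cnj c * X$$(j,i) + cnj c * c * X$$(j,j)"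
proof -
  have "qf X (wv p i j c) = (\<Sum>a<p. \<Sum>b<p. cnj (wv p i j c $ a) * X$$(a,b) * wv p i j c $ b)"
    unfolding qf_def wv_def by simp
  also have "\<dots> = (\<Sum>b<p. cnj (wv p i j c $ i) * X$$(i,b) * wv p i j c $ b)
                 + (\<Sum>b<p. cnj (wv p i j c $ j) * X$$(j,b) * wv p i j c $ b)"
    using ij by (intro sum2) (auto simp: wv_index)
  also have "(\<Sum>b<p. cnj (wv p i j c $ i) * X$$(i,b) * wv p i j c $ b)
     = cnj (wv p i j c $ i) * X$$(i,i) * wv p i j c $ i + cnj (wv p i j c $ i) * X$$(i,j) * wv p i j c $ j"
    using ij by (intro sum2) (auto simp: wv_index)
  also have "(\<Sum>b<p. cnj (wv p i j c $ j) * X$$(j,b) * wv p i j c $ b)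
     = cnj (wv p i j c $ j) * X$$(j,i) * wv p i j c $ i + cnj (wv p i j c $ j) * X$$(j,j) * wv p i j c $ j"
    using ij by (intro sum2) (auto simp: wv_index)
  finally show ?thesis using ij by (simp add: wv_index algebra_simps)
qed

definition phases :: "complex list" where "phases = [1, \<i>, -1, -\<i>]"

lemma phase_sum: assumes ij: "i \<noteq> j" "i < p" "j < p" and lm: "l < p" "m < p" and X: "X \<in> carrier_mat p p"
  shows "(\<Sum>c\<leftarrow>phases. wv p i j c $ l * qf X (wv p i j c) * cnj (wv p i j c $ m))
   = 4 * ((if l = i \<and> m = j then X$$(i,j) else 0) + (if l = j \<and> m = i then X$$(j,i) else 0)
          + (if l = m \<and> (l = i \<or> l = j) then X$$(i,i) + X$$(j,j) else 0))"
proof -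
  have q: "\<And>c. qf X (wv p i j c) = X$$(i,i) + c * X$$(i,j) + cnj c * X$$(j,i) + cnj c * c * X$$(j,j)"
    by (rule qf_wv[OF ij X])
  have w: "\<And>c k. k < p \<Longrightarrow> wv p i j c $ k = (if k = i then 1 else if k = j then c else 0)"
    by (rule wv_index)
  show ?thesis
    unfolding phases_def using ij lm
    apply (simp only: sum_list.Cons sum_list.Nil list.map q w[OF lm(1)] w[OF lm(2)])
    apply (cases "l = i"; cases "l = j"; cases "m = i"; cases "m = j")
    apply (simp_all add: algebra_simps)
    done
qed

lemma adj_facts: assumes "adjacency_matrix p A"
  shows "A \<in> carrier_mat p p" and "\<And>i j. i < p \<Longrightarrow> j < p \<Longrightarrow> A$$(i,j) = 0 \<or> A$$(i,j) = 1"
    and "\<And>i. i < p \<Longrightarrow> A$$(i,i) = 0"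
    and "\<And>i j. i < p \<Longrightarrow> j < p \<Longrightarrow> A$$(j,i) = A$$(i,j)"
    and "\<forall>i<p. \<forall>j<p. A$$(i,j) = cnj (A$$(j,i))"
    and "\<And>i j. i < p \<Longrightarrow> j < p \<Longrightarrow> complex_of_real (Re (A$$(i,j))) = A$$(i,j)"
    and "\<And>i j. i < p \<Longrightarrow> j < p \<Longrightarrow> A$$(i,j) * A$$(i,j) = A$$(i,j)"
    and "\<And>i j. i < p \<Longrightarrow> j < p \<Longrightarrow> 0 \<le> Re (A$$(i,j)) \<and> Re (A$$(i,j)) \<le> 1"
proof -
  show A: "A \<in> carrier_mat p p" using assms unfolding adjacency_matrix_def by auto
  show z: "\<And>i j. i < p \<Longrightarrow> j < p \<Longrightarrow> A$$(i,j) = 0 \<or> A$$(i,j) = 1"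
    using assms unfolding adjacency_matrix_def by auto
  show "\<And>i. i < p \<Longrightarrow> A$$(i,i) = 0" using assms unfolding adjacency_matrix_def by auto
  show h: "\<forall>i<p. \<forall>j<p. A$$(i,j) = cnj (A$$(j,i))"
    using assms self_adjoint_iff[OF A] unfolding adjacency_matrix_def by blast
  show "\<And>i j. i < p \<Longrightarrow> j < p \<Longrightarrow> A$$(j,i) = A$$(i,j)"
  proof -
    fix i j assume ij: "i < p" "j < p"
    have "A$$(j,i) = cnj (A$$(i,j))" using h ij by blast
    moreover have "cnj (A$$(i,j)) = A$$(i,j)" using z[OF ij] by auto
    ultimately show "A$$(j,i) = A$$(i,j)" by simp
  qed
  show "\<And>i j. i < p \<Longrightarrow> j < p \<Longrightarrow> complex_of_real (Re (A$$(i,j))) = A$$(i,j)"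
    using z by fastforce
  show "\<And>i j. i < p \<Longrightarrow> j < p \<Longrightarrow> A$$(i,j) * A$$(i,j) = A$$(i,j)"
    using z by fastforce
  show "\<And>i j. i < p \<Longrightarrow> j < p \<Longrightarrow> 0 \<le> Re (A$$(i,j)) \<and> Re (A$$(i,j)) \<le> 1"
    using z by fastforce
qed

lemma eb_entries: assumes "entanglement_breaking p \<phi>"
  shows "\<exists>(V::nat \<Rightarrow> complex vec) (W::nat \<Rightarrow> complex vec) (L::nat). (\<forall>k<L. V k \<in> carrier_vec p \<and> W k \<in> carrier_vec p) \<and>
    (\<forall>X\<in>carrier_mat p p. \<phi> X \<in> carrier_mat p p \<and> (\<forall>l<p. \<forall>m<p. \<phi> X $$ (l,m) = (\<Sum>k<L. V k $ l * qf X (W k) * cnj (V k $ m))))"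
proof -
  obtain vw where c: "\<forall>(v, w) \<in> set vw. v \<in> carrier_vec p \<and> w \<in> carrier_vec p"
    and e: "\<forall>X \<in> carrier_mat p p. \<phi> X = foldr (+) (map (\<lambda>(v, w). col_mat v * mat_adjoint (col_mat w) * X
                                     * col_mat w * mat_adjoint (col_mat v)) vw) (0\<^sub>m p p)"
    using assms unfolding entanglement_breaking_def by blast
  define V where "V k = fst (vw ! k)" for k
  define W where "W k = snd (vw ! k)" for k
  have cVW: "\<forall>k<length vw. V k \<in> carrier_vec p \<and> W k \<in> carrier_vec p"
    using c unfolding V_def W_def by (metis nth_mem prod.collapse case_prodD)
  have "\<phi> X \<in> carrier_mat p p \<and> (\<forall>l<p. \<forall>m<p. \<phi> X $$ (l,m) = (\<Sum>k<length vw. V k $ l * qf X (W k) * cnj (V k $ m)))"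
    if X: "X \<in> carrier_mat p p" for X
  proof -
    let ?f = "\<lambda>(v, w). col_mat v * mat_adjoint (col_mat w) * X * col_mat w * mat_adjoint (col_mat v)"
    have fc: "\<forall>x\<in>set vw. ?f x \<in> carrier_mat p p" using c eb_term(1)[OF _ _ X] by auto
    have "\<phi> X \<in> carrier_mat p p" using e X foldr_index(1)[OF fc] by simp
    moreover have "\<phi> X $$ (l,m) = (\<Sum>k<length vw. V k $ l * qf X (W k) * cnj (V k $ m))" if lm: "l < p" "m < p" for l m
    proof -
      have "\<phi> X $$ (l,m) = (\<Sum>x\<leftarrow>vw. ?f x $$ (l,m))" using e X foldr_index(2)[OF fc lm] by simp
      also have "\<dots> = (\<Sum>k<length vw. ?f (vw ! k) $$ (l,m))"
        by (simp add: sum_list_sum_nth lessThan_atLeast0)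
      also have "\<dots> = (\<Sum>k<length vw. V k $ l * qf X (W k) * cnj (V k $ m))"
      proof (rule sum.cong)
        fix k assume k: "k \<in> {..<length vw}"
        have "vw ! k = (V k, W k)" unfolding V_def W_def by simp
        then show "?f (vw ! k) $$ (l,m) = V k $ l * qf X (W k) * cnj (V k $ m)"
          using eb_term(2)[of "V k" p "W k" X l m] cVW k X lm by simp
      qed simp
      finally show ?thesis .
    qed
    ultimately show ?thesis by blast
  qed
  then have "(\<forall>k<length vw. V k \<in> carrier_vec p \<and> W k \<in> carrier_vec p) \<and>
    (\<forall>X\<in>carrier_mat p p. \<phi> X \<in> carrier_mat p p \<and> (\<forall>l<p. \<forall>m<p. \<phi> X $$ (l,m) = (\<Sum>k<length vw. V k $ l * qf X (W k) * cnj (V k $ m))))"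
    using cVW by blast
  then show ?thesis by blast
qed

lemma gamma_sa: assumes adj: "adjacency_matrix p A" and X: "X \<in> carrier_mat p p" and sa: "self_adjoint X"
  shows "self_adjoint (gamma_map p A t X)"
proof -
  note af = adj_facts[OF adj]
  have hX: "\<forall>i<p. \<forall>j<p. X$$(i,j) = cnj (X$$(j,i))" using sa self_adjoint_iff[OF X] by blast
  have "cnj (mtrace X) = mtrace X"
  proof -
    have "cnj (mtrace X) = (\<Sum>i<p. cnj (X$$(i,i)))" unfolding mtrace_def using X by (simp add: cnj_sum)
    also have "\<dots> = (\<Sum>i<p. X$$(i,i))"
    proof (intro sum.cong)
      fix i assume "i \<in> {..<p}"
      then have "X$$(i,i) = cnj (X$$(i,i))" using hX by blast
      then show "cnj (X$$(i,i)) = X$$(i,i)" by simp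
    qed auto
    also have "\<dots> = mtrace X" unfolding mtrace_def using X by simp
    finally show ?thesis .
  qed
  then have cn: "cnj (ntr p X) = ntr p X" unfolding ntr_def by simp
  show ?thesis
  proof (subst self_adjoint_iff[OF gamma_carrier[OF X]], intro allI impI)
    fix i j assume ij: "i < p" "j < p"
    have "X$$(i,j) = cnj (X$$(j,i))" using hX ij by blast
    moreover have "A$$(i,j) = cnj (A$$(j,i))" using af(5) ij by blast
    ultimately show "gamma_map p A t X $$ (i, j) = cnj (gamma_map p A t X $$ (j, i))"
      using ij X cn by (simp add: gamma_index)
  qed
qed

lemma eb_pos: assumes adj: "adjacency_matrix p A" and eb: "entanglement_breaking p (gamma_map p A t)"
  shows "positive_map p (gamma_map p A t)"
  unfolding positive_map_def
proof (intro ballI impI)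
  fix X assume X: "X \<in> carrier_mat p p" and pX: "psd X"
  obtain V W :: "nat \<Rightarrow> complex vec" and L :: nat where cVW: "\<forall>k<L. V k \<in> carrier_vec p \<and> W k \<in> carrier_vec p"
    and e: "\<forall>X\<in>carrier_mat p p. gamma_map p A t X \<in> carrier_mat p p \<and> (\<forall>l<p. \<forall>m<p. gamma_map p A t X $$ (l,m) = (\<Sum>k<L. V k $ l * qf X (W k) * cnj (V k $ m)))"
    using eb_entries[OF eb] by blast
  have sX: "self_adjoint X" and qX: "\<forall>z\<in>carrier_vec p. 0 \<le> Re (qf X z)" using pX psd_iff[OF X] by auto
  have "0 \<le> Re (qf (gamma_map p A t X) z)" if z: "z \<in> carrier_vec p" for z
  proof -
    define S where "S k = (\<Sum>l<p. cnj (z$l) * V k $ l)" for k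
    have "qf (gamma_map p A t X) z = (\<Sum>l<p. \<Sum>m<p. cnj (z$l) * (\<Sum>k<L. V k $ l * qf X (W k) * cnj (V k $ m)) * z$m)"
      unfolding qf_def[of "gamma_map p A t X" z] using z e X by (intro sum.cong) auto
    also have "\<dots> = (\<Sum>l<p. \<Sum>m<p. \<Sum>k<L. qf X (W k) * ((cnj (z$l) * V k $ l) * cnj (cnj (z$m) * V k $ m)))"
      apply (intro sum.cong refl)
      apply (simp only: sum_distrib_left sum_distrib_right)
      apply (intro sum.cong refl)
      apply (simp add: algebra_simps)
      done
    also have "\<dots> = (\<Sum>l<p. \<Sum>k<L. \<Sum>m<p. qf X (W k) * ((cnj (z$l) * V k $ l) * cnj (cnj (z$m) * V k $ m)))"
      by (rule sum.cong[OF refl]) (rule sum.swap)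
    also have "\<dots> = (\<Sum>k<L. \<Sum>l<p. \<Sum>m<p. qf X (W k) * ((cnj (z$l) * V k $ l) * cnj (cnj (z$m) * V k $ m)))"
      by (rule sum.swap)
    also have "\<dots> = (\<Sum>k<L. qf X (W k) * (S k * cnj (S k)))"
    proof (rule sum.cong[OF refl])
      fix k
      define a where "a l = cnj (z$l) * V k $ l" for l
      have "qf X (W k) * (S k * cnj (S k)) = qf X (W k) * (\<Sum>l<p. a l * cnj (S k))"
        unfolding S_def a_def by (simp add: sum_distrib_right)
      also have "\<dots> = qf X (W k) * (\<Sum>l<p. \<Sum>m<p. a l * cnj (a m))"
        unfolding S_def a_def[symmetric] by (simp add: cnj_sum sum_distrib_left)
      also have "\<dots> = (\<Sum>l<p. \<Sum>m<p. qf X (W k) * (a l * cnj (a m)))"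
        by (simp add: sum_distrib_left)
      finally show "(\<Sum>l<p. \<Sum>m<p. qf X (W k) * ((cnj (z$l) * V k $ l) * cnj (cnj (z$m) * V k $ m)))
          = qf X (W k) * (S k * cnj (S k))" unfolding a_def by simp
    qed
    finally have eq: "qf (gamma_map p A t X) z = (\<Sum>k<L. qf X (W k) * (S k * cnj (S k)))" .
    have "0 \<le> Re (qf X (W k) * (S k * cnj (S k)))" if k: "k < L" for k
    proof -
      have "0 \<le> Re (qf X (W k))" using qX cVW k by blast
      moreover have "S k * cnj (S k) = of_real ((cmod (S k))^2)" by (simp add: complex_norm_square[symmetric])
      ultimately show ?thesis by simp
    qed
    then show ?thesis unfolding eq Re_sum by (auto intro: sum_nonneg)
  qed
  then show "psd (gamma_map p A t X)"
    using gamma_sa[OF adj X sX] psd_iff[OF gamma_carrier[OF X]] by blast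
qed



lemma sdelta: fixes F :: "nat \<Rightarrow> 'a::comm_monoid_add" shows "m < p \<Longrightarrow> (\<Sum>j<p. if j = m then F j else 0) = F m"
  by (simp add: sum.delta)

lemma dsum: fixes G :: "nat \<Rightarrow> nat \<Rightarrow> 'a::comm_monoid_add"
  assumes "l < p" "m < p"
  shows "(\<Sum>i<p. \<Sum>j<p. (if i = l \<and> j = m then G i j else 0)) = G l m"
proof -
  have "(\<Sum>i<p. \<Sum>j<p. (if i = l \<and> j = m then G i j else 0)) = (\<Sum>i<p. if i = l then G i m else 0)"
  proof (rule sum.cong[OF refl])
    fix i assume "i \<in> {..<p}"
    show "(\<Sum>j<p. (if i = l \<and> j = m then G i j else 0)) = (if i = l then G i m else 0)"
    proof (cases "i = l")
      case True
      then have "(\<Sum>j<p. (if i = l \<and> j = m then G i j else 0)) = (\<Sum>j<p. if j = m then G i j else 0)" by simp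
      also have "\<dots> = G i m" using assms(2) by (rule sdelta)
      finally show ?thesis using True by simp
    qed simp
  qed
  also have "\<dots> = G l m" using assms(1) by (rule sdelta)
  finally show ?thesis .
qed

lemma final_alg: fixes a x :: "nat \<Rightarrow> nat \<Rightarrow> complex"
  assumes lm: "l < p" "m < p" and sym: "\<And>i j. i < p \<Longrightarrow> j < p \<Longrightarrow> a j i = a i j"
    and dz: "\<And>i. i < p \<Longrightarrow> a i i = 0"
  shows "(\<Sum>i<p. \<Sum>j<p. a i j / 2 * ((if l = i \<and> m = j then x i j else 0) + (if l = j \<and> m = i then x j i else 0)
            + (if l = m \<and> (l = i \<or> l = j) then x i i + x j j else 0)))
     + (if l = m then (\<Sum>q<p. (of_nat p - (if q = l then (\<Sum>j<p. a l j) else a q l)) * x q q) else 0)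
   = (if l = m then of_nat p * (\<Sum>q<p. x q q) else 0) + a l m * x l m"
proof -
  have P1: "(\<Sum>i<p. \<Sum>j<p. a i j / 2 * (if l = i \<and> m = j then x i j else 0)) = a l m / 2 * x l m"
  proof -
    have "(\<Sum>i<p. \<Sum>j<p. a i j / 2 * (if l = i \<and> m = j then x i j else 0))
       = (\<Sum>i<p. \<Sum>j<p. (if i = l \<and> j = m then a i j / 2 * x i j else 0))"
      by (intro sum.cong refl) auto
    also have "\<dots> = a l m / 2 * x l m" using lm by (rule dsum)
    finally show ?thesis .
  qed
  have P2: "(\<Sum>i<p. \<Sum>j<p. a i j / 2 * (if l = j \<and> m = i then x j i else 0)) = a l m / 2 * x l m"
  proof -
    have "(\<Sum>i<p. \<Sum>j<p. a i j / 2 * (if l = j \<and> m = i then x j i else 0))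
       = (\<Sum>i<p. \<Sum>j<p. (if i = m \<and> j = l then a i j / 2 * x j i else 0))"
      by (intro sum.cong refl) auto
    also have "\<dots> = a m l / 2 * x l m" using lm(2) lm(1) by (rule dsum)
    finally show ?thesis using sym[OF lm] by simp
  qed
  have P3: "(\<Sum>i<p. \<Sum>j<p. a i j / 2 * (if l = m \<and> (l = i \<or> l = j) then x i i + x j j else 0))
     = (if l = m then (\<Sum>j<p. a l j) * x l l + (\<Sum>j<p. a l j * x j j) else 0)"
  proof (cases "l = m")
    case False then show ?thesis by simp
  next
    case True
    have "(\<Sum>i<p. \<Sum>j<p. a i j / 2 * (if l = i \<or> l = j then x i i + x j j else 0))
      = (\<Sum>i<p. \<Sum>j<p. (if i = l then a i j / 2 * (x i i + x j j) else 0) + (if j = l then a i j / 2 * (x i i + x j j) else 0))"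
    proof (intro sum.cong refl)
      fix i j assume ij: "i \<in> {..<p}" "j \<in> {..<p}"
      show "a i j / 2 * (if l = i \<or> l = j then x i i + x j j else 0)
         = (if i = l then a i j / 2 * (x i i + x j j) else 0) + (if j = l then a i j / 2 * (x i i + x j j) else 0)"
        using dz ij by auto
    qed
    also have "\<dots> = (\<Sum>j<p. a l j / 2 * (x l l + x j j)) + (\<Sum>i<p. a i l / 2 * (x i i + x l l))"
      using lm by (simp add: sum.distrib sum.delta) (subst sum.swap, simp add: sum.delta)
    also have "\<dots> = (\<Sum>j<p. a l j / 2 * (x l l + x j j)) + (\<Sum>j<p. a l j / 2 * (x l l + x j j))"
      using sym lm by (intro arg_cong2[where f="(+)"] refl sum.cong) (auto simp: algebra_simps)
    also have "\<dots> = (\<Sum>j<p. a l j * x l l + a l j * x j j)"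
      by (simp only: sum.distrib[symmetric]) (intro sum.cong refl, simp add: field_simps)
    also have "\<dots> = (\<Sum>j<p. a l j) * x l l + (\<Sum>j<p. a l j * x j j)"
      by (simp add: sum.distrib sum_distrib_right)
    finally have calc: "(\<Sum>i<p. \<Sum>j<p. a i j / 2 * (if l = i \<or> l = j then x i i + x j j else 0))
       = (\<Sum>j<p. a l j) * x l l + (\<Sum>j<p. a l j * x j j)" .
    show ?thesis using calc by (simp only: True[symmetric] simp_thms if_True)
  qed
  have P4: "(\<Sum>q<p. (of_nat p - (if q = l then (\<Sum>j<p. a l j) else a q l)) * x q q)
     = of_nat p * (\<Sum>q<p. x q q) - (\<Sum>j<p. a l j) * x l l - (\<Sum>j<p. a l j * x j j)"
  proof -
    have "(\<Sum>q<p. (of_nat p - (if q = l then (\<Sum>j<p. a l j) else a q l)) * x q q)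
      = (\<Sum>q<p. of_nat p * x q q - (if q = l then (\<Sum>j<p. a l j) * x l l else 0) - a l q * x q q)"
      using sym dz lm by (intro sum.cong refl) (auto simp: algebra_simps)
    then show ?thesis using lm by (simp add: sum_subtractf sum_distrib_left sum.delta)
  qed
  show ?thesis
    unfolding distrib_left sum.distrib P1 P2 P3 P4 by (cases "l = m") (auto simp: dz lm)
qed



definition degr :: "nat \<Rightarrow> complex mat \<Rightarrow> nat \<Rightarrow> real" where
  "degr p A l = (\<Sum>j<p. Re (A$$(l,j)))"
definition ewt :: "complex mat \<Rightarrow> nat \<Rightarrow> nat \<Rightarrow> real" where
  "ewt A i j = sqrt (Re (A$$(i,j)) / 8)"
definition fwt :: "nat \<Rightarrow> complex mat \<Rightarrow> nat \<Rightarrow> nat \<Rightarrow> real" where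
  "fwt p A a l = real p - (if a = l then degr p A l else Re (A$$(a,l)))"
definition edge_vw :: "nat \<Rightarrow> complex mat \<Rightarrow> (complex vec \<times> complex vec) list" where
  "edge_vw p A = concat (map (\<lambda>(i,j). map (\<lambda>c. (complex_of_real (ewt A i j) \<cdot>\<^sub>v wv p i j c, wv p i j c)) phases)
      (List.product [0..<p] [0..<p]))"
definition fill_vw :: "nat \<Rightarrow> complex mat \<Rightarrow> (complex vec \<times> complex vec) list" where
  "fill_vw p A = map (\<lambda>(a,l). (complex_of_real (sqrt (fwt p A a l)) \<cdot>\<^sub>v unit_vec p l, unit_vec p a))
      (List.product [0..<p] [0..<p])"

lemma qf_unit: assumes "X \<in> carrier_mat p p" "a < p" shows "qf X (unit_vec p a) = X$$(a,a)"
proof -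
  have "qf X (unit_vec p a) = (\<Sum>i<p. \<Sum>j<p. (if i = a \<and> j = a then X$$(i,j) else 0))"
    unfolding qf_def by (intro sum.cong refl) (auto simp: unit_vec_def)
  also have "\<dots> = X$$(a,a)" using assms by (intro dsum)
  finally show ?thesis .
qed

lemma sum_list_concat_map: "sum_list (map g (concat (map h xs))) = sum_list (map (\<lambda>x. sum_list (map g (h x))) xs)"
  by (induction xs) auto

lemma fwt_nonneg: assumes adj: "adjacency_matrix p A" and "a < p" "l < p" shows "0 \<le> fwt p A a l"
proof -
  note af = adj_facts[OF adj]
  have "degr p A l \<le> (\<Sum>j<p. 1)" unfolding degr_def using af(8) assms(3) by (intro sum_mono) auto
  moreover have "Re (A$$(a,l)) \<le> 1" using af(8) assms by auto
  moreover have "1 \<le> real p" using assms by auto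
  ultimately show ?thesis unfolding fwt_def by auto
qed

lemma of_real_fwt: assumes adj: "adjacency_matrix p A" and "a < p" "l < p"
  shows "complex_of_real (fwt p A a l) = of_nat p - (if a = l then (\<Sum>j<p. A$$(l,j)) else A$$(a,l))"
proof -
  note af = adj_facts[OF adj]
  have "complex_of_real (degr p A l) = (\<Sum>j<p. A$$(l,j))"
    unfolding degr_def of_real_sum using af(6) assms(3) by (intro sum.cong) auto
  then show ?thesis unfolding fwt_def using af(6) assms by auto
qed

lemma edge_pair: assumes adj: "adjacency_matrix p A" and X: "X \<in> carrier_mat p p"
  and ij: "i < p" "j < p" and lm: "l < p" "m < p"
  shows "(\<Sum>c\<leftarrow>phases. (complex_of_real (ewt A i j) \<cdot>\<^sub>v wv p i j c) $ l * qf X (wv p i j c)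
            * cnj ((complex_of_real (ewt A i j) \<cdot>\<^sub>v wv p i j c) $ m))
    = A$$(i,j) / 2 * ((if l = i \<and> m = j then X$$(i,j) else 0) + (if l = j \<and> m = i then X$$(j,i) else 0)
            + (if l = m \<and> (l = i \<or> l = j) then X$$(i,i) + X$$(j,j) else 0))"
proof -
  note af = adj_facts[OF adj]
  have e2: "complex_of_real (ewt A i j) * complex_of_real (ewt A i j) = A$$(i,j) / 8"
  proof -
    have "ewt A i j * ewt A i j = Re (A$$(i,j)) / 8" unfolding ewt_def using af(8)[OF ij] by simp
    then have "complex_of_real (ewt A i j) * complex_of_real (ewt A i j) = complex_of_real (Re (A$$(i,j))) / 8"
      by (metis of_real_mult of_real_divide of_real_numeral)
    then show ?thesis using af(6)[OF ij] by simp
  qed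
  have "(\<Sum>c\<leftarrow>phases. (complex_of_real (ewt A i j) \<cdot>\<^sub>v wv p i j c) $ l * qf X (wv p i j c)
            * cnj ((complex_of_real (ewt A i j) \<cdot>\<^sub>v wv p i j c) $ m))
     = (\<Sum>c\<leftarrow>phases. (complex_of_real (ewt A i j) * complex_of_real (ewt A i j)) * (wv p i j c $ l * qf X (wv p i j c) * cnj (wv p i j c $ m)))"
    using lm by (intro arg_cong[where f=sum_list] map_cong refl) (simp add: wv_carrier[THEN carrier_vecD] algebra_simps)
  also have "\<dots> = A$$(i,j) / 8 * (\<Sum>c\<leftarrow>phases. wv p i j c $ l * qf X (wv p i j c) * cnj (wv p i j c $ m))"
    unfolding e2 by (rule sum_list_const_mult)
  also have "\<dots> = A$$(i,j) / 2 * ((if l = i \<and> m = j then X$$(i,j) else 0) + (if l = j \<and> m = i then X$$(j,i) else 0)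
            + (if l = m \<and> (l = i \<or> l = j) then X$$(i,i) + X$$(j,j) else 0))"
  proof (cases "i = j")
    case True then show ?thesis using af(3)[OF ij(1)] by simp
  next
    case False then show ?thesis using phase_sum[OF False ij lm X] by simp
  qed
  finally show ?thesis .
qed

lemma fill_pair: assumes adj: "adjacency_matrix p A" and X: "X \<in> carrier_mat p p"
  and lm: "l < p" "m < p" and a: "a < p"
  shows "(\<Sum>q<p. (complex_of_real (sqrt (fwt p A a q)) \<cdot>\<^sub>v unit_vec p q) $ l * qf X (unit_vec p a)
            * cnj ((complex_of_real (sqrt (fwt p A a q)) \<cdot>\<^sub>v unit_vec p q) $ m))
     = (if l = m then complex_of_real (fwt p A a l) * X$$(a,a) else 0)"
proof -
  have "(\<Sum>q<p. (complex_of_real (sqrt (fwt p A a q)) \<cdot>\<^sub>v unit_vec p q) $ l * qf X (unit_vec p a)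
            * cnj ((complex_of_real (sqrt (fwt p A a q)) \<cdot>\<^sub>v unit_vec p q) $ m))
     = (\<Sum>q<p. if q = l then (if m = l then complex_of_real (fwt p A a q) * X$$(a,a) else 0) else 0)"
  proof (intro sum.cong refl)
    fix q assume q: "q \<in> {..<p}"
    have f0: "0 \<le> fwt p A a q" using fwt_nonneg[OF adj a] q by auto
    have sqq: "complex_of_real (sqrt (fwt p A a q)) * complex_of_real (sqrt (fwt p A a q)) = complex_of_real (fwt p A a q)"
    proof -
      have "sqrt (fwt p A a q) * sqrt (fwt p A a q) = fwt p A a q" using f0 by simp
      then show ?thesis by (simp only: of_real_mult[symmetric])
    qed
    then show "(complex_of_real (sqrt (fwt p A a q)) \<cdot>\<^sub>v unit_vec p q) $ l * qf X (unit_vec p a)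
            * cnj ((complex_of_real (sqrt (fwt p A a q)) \<cdot>\<^sub>v unit_vec p q) $ m)
        = (if q = l then (if m = l then complex_of_real (fwt p A a q) * X$$(a,a) else 0) else 0)"
    proof -
      have u: "(c \<cdot>\<^sub>v unit_vec p q) $ k = (if k = q then c else 0)" if "k < p" for k and c :: complex
        using that by (simp add: unit_vec_def)
      have sq: "complex_of_real (sqrt (fwt p A a q)) * cnj (complex_of_real (sqrt (fwt p A a q))) = complex_of_real (fwt p A a q)"
        using \<open>complex_of_real (sqrt (fwt p A a q)) * complex_of_real (sqrt (fwt p A a q)) = complex_of_real (fwt p A a q)\<close> by simp
      show ?thesis
      proof (cases "q = l")
        case True
        have sqq': "complex_of_real (sqrt (fwt p A a l)) * complex_of_real (sqrt (fwt p A a l)) = complex_of_real (fwt p A a l)"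
          using sqq True by simp
        show ?thesis unfolding u[OF lm(1)] u[OF lm(2)] qf_unit[OF X a] using True sqq'
          by (cases "m = l") (simp_all add: algebra_simps)
      next
        case False then show ?thesis unfolding u[OF lm(1)] u[OF lm(2)] by simp
      qed
    qed
  qed
  also have "\<dots> = (if m = l then complex_of_real (fwt p A a l) * X$$(a,a) else 0)"
    using lm(1) by (rule sdelta)
  finally show ?thesis by auto
qed

lemma eb_exists: assumes adj: "adjacency_matrix p A" and p: "0 < p"
  shows "entanglement_breaking p (gamma_map p A (real p * real p))"
proof -
  note af = adj_facts[OF adj]
  define vw where "vw = edge_vw p A @ fill_vw p A"
  let ?f = "\<lambda>X. (\<lambda>(v, w). col_mat v * mat_adjoint (col_mat w) * X * col_mat w * mat_adjoint (col_mat v))"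
  have cvw: "\<forall>(v, w) \<in> set vw. v \<in> carrier_vec p \<and> w \<in> carrier_vec p"
    unfolding vw_def edge_vw_def fill_vw_def by (auto simp: wv_carrier)
  have "gamma_map p A (real p * real p) X = foldr (+) (map (?f X) vw) (0\<^sub>m p p)" if X: "X \<in> carrier_mat p p" for X
  proof -
    have fc: "\<forall>x\<in>set vw. ?f X x \<in> carrier_mat p p" using cvw eb_term(1)[OF _ _ X] by auto
    show ?thesis
    proof (rule eq_matI)
      show "dim_row (gamma_map p A (real p * real p) X) = dim_row (foldr (+) (map (?f X) vw) (0\<^sub>m p p))"
        using gamma_carrier[OF X, of A "real p * real p"] foldr_index(1)[OF fc] unfolding carrier_mat_def by simp
      show "dim_col (gamma_map p A (real p * real p) X) = dim_col (foldr (+) (map (?f X) vw) (0\<^sub>m p p))"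
        using gamma_carrier[OF X, of A "real p * real p"] foldr_index(1)[OF fc] unfolding carrier_mat_def by simp
      fix l m assume "l < dim_row (foldr (+) (map (?f X) vw) (0\<^sub>m p p))" "m < dim_col (foldr (+) (map (?f X) vw) (0\<^sub>m p p))"
      then have lm: "l < p" "m < p" using foldr_index(1)[OF fc] by auto
      have "foldr (+) (map (?f X) vw) (0\<^sub>m p p) $$ (l,m) = (\<Sum>x\<leftarrow>vw. ?f X x $$ (l,m))"
        using foldr_index(2)[OF fc lm] .
      also have "\<dots> = (\<Sum>x\<leftarrow>vw. fst x $ l * qf X (snd x) * cnj (fst x $ m))"
        using cvw lm X by (intro arg_cong[where f=sum_list] map_cong refl) (auto simp: eb_term(2))
      also have "\<dots> = (\<Sum>x\<leftarrow>edge_vw p A. fst x $ l * qf X (snd x) * cnj (fst x $ m))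
                     + (\<Sum>x\<leftarrow>fill_vw p A. fst x $ l * qf X (snd x) * cnj (fst x $ m))"
        unfolding vw_def by simp
      also have "(\<Sum>x\<leftarrow>edge_vw p A. fst x $ l * qf X (snd x) * cnj (fst x $ m))
        = (\<Sum>i<p. \<Sum>j<p. A$$(i,j) / 2 * ((if l = i \<and> m = j then X$$(i,j) else 0) + (if l = j \<and> m = i then X$$(j,i) else 0)
            + (if l = m \<and> (l = i \<or> l = j) then X$$(i,i) + X$$(j,j) else 0)))"
      proof -
        have "(\<Sum>x\<leftarrow>edge_vw p A. fst x $ l * qf X (snd x) * cnj (fst x $ m))
          = (\<Sum>i<p. \<Sum>j<p. (\<Sum>c\<leftarrow>phases. (complex_of_real (ewt A i j) \<cdot>\<^sub>v wv p i j c) $ l * qf X (wv p i j c)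
            * cnj ((complex_of_real (ewt A i j) \<cdot>\<^sub>v wv p i j c) $ m)))"
          unfolding edge_vw_def sum_list_concat_map by (simp add: sum_list_product comp_def)
        also have "\<dots> = (\<Sum>i<p. \<Sum>j<p. A$$(i,j) / 2 * ((if l = i \<and> m = j then X$$(i,j) else 0) + (if l = j \<and> m = i then X$$(j,i) else 0)
            + (if l = m \<and> (l = i \<or> l = j) then X$$(i,i) + X$$(j,j) else 0)))"
          using edge_pair[OF adj X _ _ lm] by (intro sum.cong refl) auto
        finally show ?thesis .
      qed
      also have "(\<Sum>x\<leftarrow>fill_vw p A. fst x $ l * qf X (snd x) * cnj (fst x $ m))
        = (if l = m then (\<Sum>q<p. (of_nat p - (if q = l then (\<Sum>j<p. A$$(l,j)) else A$$(q,l))) * X$$(q,q)) else 0)"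
      proof -
        have "(\<Sum>x\<leftarrow>fill_vw p A. fst x $ l * qf X (snd x) * cnj (fst x $ m))
          = (\<Sum>a<p. \<Sum>q<p. (complex_of_real (sqrt (fwt p A a q)) \<cdot>\<^sub>v unit_vec p q) $ l * qf X (unit_vec p a)
            * cnj ((complex_of_real (sqrt (fwt p A a q)) \<cdot>\<^sub>v unit_vec p q) $ m))"
          unfolding fill_vw_def by (simp add: sum_list_product comp_def)
        also have "\<dots> = (\<Sum>a<p. if l = m then complex_of_real (fwt p A a l) * X$$(a,a) else 0)"
          using fill_pair[OF adj X lm] by (intro sum.cong refl) auto
        also have "\<dots> = (if l = m then (\<Sum>q<p. (of_nat p - (if q = l then (\<Sum>j<p. A$$(l,j)) else A$$(q,l))) * X$$(q,q)) else 0)"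
          using of_real_fwt[OF adj _ lm(1)] by (auto intro!: sum.cong)
        finally show ?thesis .
      qed
      also have "(\<Sum>i<p. \<Sum>j<p. A$$(i,j) / 2 * ((if l = i \<and> m = j then X$$(i,j) else 0) + (if l = j \<and> m = i then X$$(j,i) else 0)
            + (if l = m \<and> (l = i \<or> l = j) then X$$(i,i) + X$$(j,j) else 0)))
          + (if l = m then (\<Sum>q<p. (of_nat p - (if q = l then (\<Sum>j<p. A$$(l,j)) else A$$(q,l))) * X$$(q,q)) else 0)
        = (if l = m then of_nat p * (\<Sum>q<p. X$$(q,q)) else 0) + A$$(l,m) * X$$(l,m)"
        by (rule final_alg[where a="\<lambda>i j. A$$(i,j)" and x="\<lambda>i j. X$$(i,j)", OF lm]) (auto simp: af(3) af(4))
      also have "\<dots> = gamma_map p A (real p * real p) X $$ (l, m)"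
      proof -
        have "mtrace X = (\<Sum>q<p. X$$(q,q))" unfolding mtrace_def using X by simp
        then have h: "of_nat p * (\<Sum>q<p. X$$(q,q)) = complex_of_real (real p * real p) * ntr p X"
          unfolding ntr_def using p by simp
        show ?thesis by (simp only: gamma_index[OF X lm] h)
      qed
      finally show "gamma_map p A (real p * real p) X $$ (l, m) = foldr (+) (map (?f X) vw) (0\<^sub>m p p) $$ (l, m)"
        by simp
    qed
  qed
  then show ?thesis unfolding entanglement_breaking_def using cvw by blast
qed



lemma wv_dim[simp]: "dim_vec (wv p i j c) = p" unfolding wv_def by simp

lemma edge_test: assumes adj: "adjacency_matrix p A" and e: "i < p" "j < p" "A$$(i,j) = 1"
  and s: "positive_map p (gamma_map p A s)"
  shows "real p / 2 \<le> s"
proof -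
  note af = adj_facts[OF adj]
  have ij: "i \<noteq> j" using af(3)[OF e(1)] e by auto
  have Aji: "A$$(j,i) = 1" using af(4)[OF e(1,2)] e by simp
  define v where "v = wv p i j 1"
  define X where "X = outer v"
  have v: "v \<in> carrier_vec p" unfolding v_def by (rule wv_carrier)
  have X: "X \<in> carrier_mat p p" unfolding X_def using v by (rule outer_carrier)
  have "0 \<le> Re (qf (gamma_map p A s X) (wv p i j (-1)))"
    using pos_test[OF s X _ wv_carrier] outer_psd[OF v] unfolding X_def by blast
  also have "qf (gamma_map p A s X) (wv p i j (-1))
     = gamma_map p A s X $$ (i,i) - gamma_map p A s X $$ (i,j) - gamma_map p A s X $$ (j,i) + gamma_map p A s X $$ (j,j)"
    using qf_wv[OF ij e(1,2) gamma_carrier[OF X]] by simp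
  also have "\<dots> = 2 * (of_real s * ntr p X) - 2"
    using X e ij Aji af(3) unfolding X_def outer_def v_def by (simp add: gamma_index wv_index)
  also have "ntr p X = 2 / of_nat p"
  proof -
    have "(\<Sum>k<p. v$k * cnj (v$k)) = v$i * cnj (v$i) + v$j * cnj (v$j)"
      using ij e by (intro sum2) (auto simp: v_def wv_index)
    also have "\<dots> = 2" using ij e by (simp add: v_def wv_index)
    finally show ?thesis unfolding X_def ntr_outer[OF v] by simp
  qed
  finally have "0 \<le> 4 * s / real p - 2" by simp
  then show ?thesis using e by (simp add: field_simps)
qed

lemma J_test: assumes adj: "adjacency_matrix p A" and p: "0 < p"
  and s: "positive_map p (gamma_map p A s)"
  shows "- lambda_min A \<le> s"
proof -
  note af = adj_facts[OF adj]
  obtain c where c: "eigenvalue A c" "Re c = lambda_min A" using lambda_min_props[OF af(1) af(5) p] by blast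
  obtain u where u: "u \<in> carrier_vec p" "nsq u > 0" "\<forall>i<p. (\<Sum>j<p. A$$(i,j) * u$j) = c * u$i"
    using eig_vec[OF af(1) c(1)] by blast
  define v where "v = vec p (\<lambda>_. 1::complex)"
  have v: "v \<in> carrier_vec p" unfolding v_def by simp
  have X: "outer v \<in> carrier_mat p p" using v by (rule outer_carrier)
  have "0 \<le> Re (qf (gamma_map p A s (outer v)) u)"
    using pos_test[OF s X outer_psd[OF v] u(1)] .
  also have "qf (gamma_map p A s (outer v)) u = of_real s * of_real (nsq u) + c * of_real (nsq u)"
  proof -
    have "ntr p (outer v) = 1" unfolding ntr_outer[OF v] using p by (simp add: v_def)
    moreover have "(\<Sum>i<p. cnj (u$i) * u$i) = of_real (nsq u)" using sum_cnj_nsq[of u] u(1) by simp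
    moreover have "(\<Sum>i<p. \<Sum>j<p. cnj (u$i) * (A$$(i,j) * outer v $$ (i,j)) * u$j) = qf A u"
      unfolding qf_def using u(1) by (intro sum.cong refl) (auto simp: outer_def v_def)
    moreover have "qf A u = c * of_real (nsq u)" using qf_eig[OF u(1) u(3)] .
    ultimately show ?thesis unfolding qf_gamma[OF X u(1)] by simp
  qed
  finally have "0 \<le> (s + Re c) * nsq u" by (simp add: algebra_simps)
  then have "0 \<le> s + Re c" using u(2) by (simp add: zero_le_mult_iff)
  then show ?thesis using c(2) by simp
qed

lemma theta_test: assumes adj: "adjacency_matrix p A" and p: "0 < p"
  and s: "positive_map p (gamma_map p A s)"
  and H: "H \<in> carrier_mat p p" "self_adjoint H" "\<forall>i<p. H $$ (i, i) = 1"
         "\<forall>i<p. \<forall>j<p. A $$ (i, j) = 1 \<longrightarrow> H $$ (i, j) = 1"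
  shows "lambda_max A \<le> s * (lambda_max H - 1)"
proof -
  note af = adj_facts[OF adj]
  have hH: "\<forall>i<p. \<forall>j<p. H$$(i,j) = cnj (H$$(j,i))" using H(2) self_adjoint_iff[OF H(1)] by blast
  define lam where "lam = lambda_max H"
  have ray: "\<forall>z\<in>carrier_vec p. Re (qf H z) \<le> lam * nsq z" unfolding lam_def
    using lambda_max_props(2)[OF H(1) hH p] .
  define Y where "Y = complex_of_real lam \<cdot>\<^sub>m 1\<^sub>m p - H"
  have Y: "Y \<in> carrier_mat p p" unfolding Y_def using H(1) by (rule minus_carrier_mat)
  have Yi: "Y $$ (i,j) = (if i = j then complex_of_real lam else 0) - H$$(i,j)" if "i < p" "j < p" for i j
    unfolding Y_def using that H(1) by simp
  have psdY: "psd Y"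
  proof -
    have "self_adjoint Y"
    proof (subst self_adjoint_iff[OF Y], intro allI impI)
      fix i j assume ij: "i < p" "j < p"
      have "H$$(i,j) = cnj (H$$(j,i))" using hH ij by blast
      then show "Y$$(i,j) = cnj (Y$$(j,i))" using ij by (simp add: Yi)
    qed
    moreover have "\<forall>z\<in>carrier_vec p. 0 \<le> Re (qf Y z)"
      using ray unfolding Y_def by (auto simp: qf_shift[OF H(1)])
    ultimately show ?thesis using psd_iff[OF Y] by blast
  qed
  obtain c where c: "eigenvalue A c" "Re c = lambda_max A" using lambda_max_props(1)[OF af(1) af(5) p] by blast
  obtain u where u: "u \<in> carrier_vec p" "nsq u > 0" "\<forall>i<p. (\<Sum>j<p. A$$(i,j) * u$j) = c * u$i"
    using eig_vec[OF af(1) c(1)] by blast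
  have "0 \<le> Re (qf (gamma_map p A s Y) u)" using pos_test[OF s Y psdY u(1)] .
  also have "qf (gamma_map p A s Y) u = of_real s * of_real (lam - 1) * of_real (nsq u) - c * of_real (nsq u)"
  proof -
    have "mtrace Y = (\<Sum>i<p. complex_of_real lam - 1)"
      unfolding mtrace_def using Y H(3) by (auto simp: Yi intro!: sum.cong)
    then have "ntr p Y = of_real (lam - 1)" unfolding ntr_def using p by simp
    moreover have "(\<Sum>i<p. cnj (u$i) * u$i) = of_real (nsq u)" using sum_cnj_nsq[of u] u(1) by simp
    moreover have "(\<Sum>i<p. \<Sum>j<p. cnj (u$i) * (A$$(i,j) * Y $$ (i,j)) * u$j) = - qf A u"
    proof -
      have "A$$(i,j) * Y $$ (i,j) = - A$$(i,j)" if "i < p" "j < p" for i j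
      proof (cases "i = j")
        case True then show ?thesis using af(3) that by simp
      next
        case False
        then show ?thesis using af(2)[OF that] H(4) that by (auto simp: Yi)
      qed
      then show ?thesis unfolding qf_def using u(1) by (simp add: sum_negf[symmetric])
    qed
    moreover have "qf A u = c * of_real (nsq u)" using qf_eig[OF u(1) u(3)] .
    ultimately show ?thesis unfolding qf_gamma[OF Y u(1)] by simp
  qed
  finally have "0 \<le> (s * (lam - 1) - Re c) * nsq u" by (simp add: algebra_simps)
  then have "0 \<le> s * (lam - 1) - Re c" using u(2) by (simp add: zero_le_mult_iff)
  then show ?thesis using c(2) unfolding lam_def by simp
qed

lemma deg_bound: assumes adj: "adjacency_matrix p A" and p: "0 < p"
  shows "- lambda_min A \<le> real (card (edges p A)) / 2"
proof -
  note af = adj_facts[OF adj]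
  obtain c where c: "eigenvalue A c" "Re c = lambda_min A" using lambda_min_props[OF af(1) af(5) p] by blast
  obtain u where u: "u \<in> carrier_vec p" "nsq u > 0" "\<forall>i<p. (\<Sum>j<p. A$$(i,j) * u$j) = c * u$i"
    using eig_vec[OF af(1) c(1)] by blast
  define M where "M = Max ((\<lambda>j. cmod (u$j)) ` {..<p})"
  have "M \<in> (\<lambda>j. cmod (u$j)) ` {..<p}" unfolding M_def using p by (intro Max_in) auto
  then obtain k where k: "k < p" "cmod (u$k) = M" by auto
  have Mge: "cmod (u$j) \<le> M" if "j < p" for j unfolding M_def using that by (intro Max_ge) auto
  have Mpos: "M > 0"
  proof (rule ccontr)
    assume "\<not> M > 0"
    then have "\<forall>j<p. cmod (u$j) = 0"
    proof (intro allI impI)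
      fix j assume "j < p"
      then have "cmod (u$j) \<le> M" by (rule Mge)
      moreover have "0 \<le> cmod (u$j)" by simp
      ultimately show "cmod (u$j) = 0" using \<open>\<not> M > 0\<close> by linarith
    qed
    then have "nsq u = 0" unfolding nsq_def using u(1) by simp
    then show False using u(2) by simp
  qed
  define N where "N = {j. j < p \<and> A$$(k,j) = 1}"
  have finN: "finite N" unfolding N_def by simp
  have "cmod c * M = cmod (\<Sum>j<p. A$$(k,j) * u$j)" using u(3) k by (simp add: norm_mult)
  also have "\<dots> \<le> (\<Sum>j<p. cmod (A$$(k,j) * u$j))" by (rule norm_sum)
  also have "\<dots> \<le> (\<Sum>j<p. (if A$$(k,j) = 1 then M else 0))"
  proof (intro sum_mono)
    fix j assume j: "j \<in> {..<p}"
    show "cmod (A$$(k,j) * u$j) \<le> (if A$$(k,j) = 1 then M else 0)"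
      using af(2)[OF k(1), of j] j Mge[of j] by (auto simp: norm_mult)
  qed
  also have "\<dots> = real (card N) * M" unfolding N_def
    by (simp add: sum.If_cases Int_def)
  finally have "cmod c * M \<le> real (card N) * M" .
  then have cN: "cmod c \<le> real (card N)" using Mpos by simp
  have "2 * card N \<le> card (edges p A)"
  proof -
    have sub: "Pair k ` N \<union> (\<lambda>j. (j,k)) ` N \<subseteq> edges p A"
      unfolding N_def edges_def using k af(4) by auto
    have fin: "finite (edges p A)"
      by (rule finite_subset[of _ "{..<p} \<times> {..<p}"]) (auto simp: edges_def)
    have disj: "Pair k ` N \<inter> (\<lambda>j. (j,k)) ` N = {}"
      unfolding N_def using af(3)[OF k(1)] by auto
    have "card (Pair k ` N \<union> (\<lambda>j. (j,k)) ` N) = card (Pair k ` N) + card ((\<lambda>j. (j,k)) ` N)"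
      using disj finN by (intro card_Un_disjoint) auto
    also have "\<dots> = 2 * card N" by (simp add: card_image inj_on_def)
    finally show ?thesis using card_mono[OF fin sub] by simp
  qed
  then have "real (card N) \<le> real (card (edges p A)) / 2" by simp
  moreover have "- Re c \<le> cmod c" using abs_Re_le_cmod[of c] by linarith
  ultimately show ?thesis using cN c(2) by linarith
qed

lemma swap3: "(\<Sum>k\<in>K. \<Sum>n\<in>N. \<Sum>i\<in>I. f k n i) = (\<Sum>n\<in>N. \<Sum>i\<in>I. \<Sum>k\<in>K. f k n i)"
proof -
  have "(\<Sum>k\<in>K. \<Sum>n\<in>N. \<Sum>i\<in>I. f k n i) = (\<Sum>n\<in>N. \<Sum>k\<in>K. \<Sum>i\<in>I. f k n i)"
    by (rule sum.swap)
  also have "\<dots> = (\<Sum>n\<in>N. \<Sum>i\<in>I. \<Sum>k\<in>K. f k n i)"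
    by (rule sum.cong[OF refl]) (rule sum.swap)
  finally show ?thesis .
qed

definition Emat :: "nat \<Rightarrow> nat \<Rightarrow> nat \<Rightarrow> complex mat" where
  "Emat p a b = mat p p (\<lambda>(i,j). if i = a \<and> j = b then 1 else 0)"

lemma T_ident: assumes adj: "adjacency_matrix p A" and p: "0 < p"
  and e: "\<forall>X\<in>carrier_mat p p. gamma_map p A t X \<in> carrier_mat p p \<and> (\<forall>l<p. \<forall>m<p. gamma_map p A t X $$ (l,m) = (\<Sum>k<L. V k $ l * qf X (W k) * cnj (V k $ m)))"
  and cW: "\<forall>k<L. W k \<in> carrier_vec p"
  and abl: "a < p" "b < p" "l < p" "m < p"
  shows "(\<Sum>k<L. V k $ l * cnj (W k $ a) * W k $ b * cnj (V k $ m))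
     = (if l = m \<and> a = b then of_real t / of_nat p else 0) + (if l = a \<and> m = b then A$$(l,m) else 0)"
proof -
  have E: "Emat p a b \<in> carrier_mat p p" unfolding Emat_def by simp
  have qE: "qf (Emat p a b) w = cnj (w$a) * w$b" if w: "w \<in> carrier_vec p" for w
  proof -
    have "qf (Emat p a b) w = (\<Sum>i<p. \<Sum>j<p. (if i = a \<and> j = b then cnj (w$i) * w$j else 0))"
      unfolding qf_def Emat_def using w by (intro sum.cong refl) auto
    also have "\<dots> = cnj (w$a) * w$b" using abl by (intro dsum)
    finally show ?thesis .
  qed
  have tr: "ntr p (Emat p a b) = (if a = b then 1 else 0) / of_nat p"
  proof -
    have "mtrace (Emat p a b) = (\<Sum>i<p. if i = a then (if a = b then 1 else 0) else 0)"
      unfolding mtrace_def Emat_def by (intro sum.cong) auto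
    also have "\<dots> = (if a = b then 1 else 0)" using abl(1) by (rule sdelta)
    finally show ?thesis unfolding ntr_def by simp
  qed
  have "gamma_map p A t (Emat p a b) $$ (l,m) = (\<Sum>k<L. V k $ l * qf (Emat p a b) (W k) * cnj (V k $ m))"
    using e E abl by blast
  also have "\<dots> = (\<Sum>k<L. V k $ l * cnj (W k $ a) * W k $ b * cnj (V k $ m))"
    using cW qE by (intro sum.cong refl) (auto simp: mult.assoc)
  finally have "(\<Sum>k<L. V k $ l * cnj (W k $ a) * W k $ b * cnj (V k $ m)) = gamma_map p A t (Emat p a b) $$ (l,m)" by simp
  also have "\<dots> = (if l = m then of_real t * ntr p (Emat p a b) else 0) + A$$(l,m) * Emat p a b $$ (l,m)"
    using gamma_index[OF E abl(3,4)] .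
  also have "\<dots> = (if l = m \<and> a = b then of_real t / of_nat p else 0) + (if l = a \<and> m = b then A$$(l,m) else 0)"
    unfolding tr using abl by (auto simp: Emat_def)
  finally show ?thesis .
qed

lemma eb_test: assumes adj: "adjacency_matrix p A" and p: "0 < p"
  and s: "positive_map p (gamma_map p A s)" and t: "entanglement_breaking p (gamma_map p A t)"
  shows "- real p * lambda_min A \<le> s * t"
proof -
  note af = adj_facts[OF adj]
  obtain V W :: "nat \<Rightarrow> complex vec" and L :: nat where cVW: "\<forall>k<L. V k \<in> carrier_vec p \<and> W k \<in> carrier_vec p"
    and e: "\<forall>X\<in>carrier_mat p p. gamma_map p A t X \<in> carrier_mat p p \<and> (\<forall>l<p. \<forall>m<p. gamma_map p A t X $$ (l,m) = (\<Sum>k<L. V k $ l * qf X (W k) * cnj (V k $ m)))"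
    using eb_entries[OF t] by blast
  have cW: "\<forall>k<L. W k \<in> carrier_vec p" using cVW by blast
  note T = T_ident[OF adj p e cW]
  obtain c where c: "eigenvalue A c" "Re c = lambda_min A" using lambda_min_props[OF af(1) af(5) p] by blast
  obtain u where u: "u \<in> carrier_vec p" "nsq u > 0" "\<forall>i<p. (\<Sum>j<p. A$$(i,j) * u$j) = c * u$i"
    using eig_vec[OF af(1) c(1)] by blast
  define y where "y k = vec p (\<lambda>i. u$i * W k $ i)" for k
  have y: "y k \<in> carrier_vec p" for k unfolding y_def by simp
  have Vc: "V k \<in> carrier_vec p" if "k < L" for k using cVW that by blast
  have Vd: "dim_vec (V k) = p" if "k < L" for k using Vc[OF that] by simp
  have "0 \<le> Re (\<Sum>k<L. qf (gamma_map p A s (outer (V k))) (y k))"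
    unfolding Re_sum using pos_test[OF s outer_carrier outer_psd y] Vc by (auto intro!: sum_nonneg)
  also have "(\<Sum>k<L. qf (gamma_map p A s (outer (V k))) (y k))
     = (\<Sum>k<L. of_real s * ntr p (outer (V k)) * (\<Sum>i<p. cnj (y k $ i) * y k $ i))
       + (\<Sum>k<L. \<Sum>l<p. \<Sum>m<p. cnj (y k $ l) * (A$$(l,m) * outer (V k) $$ (l,m)) * y k $ m)"
    unfolding sum.distrib[symmetric] using Vc y by (intro sum.cong refl qf_gamma outer_carrier) auto
  also have "(\<Sum>k<L. of_real s * ntr p (outer (V k)) * (\<Sum>i<p. cnj (y k $ i) * y k $ i))
      = of_real s * of_real t / of_nat p * of_real (nsq u)"
  proof -
    have "(\<Sum>k<L. of_real s * ntr p (outer (V k)) * (\<Sum>i<p. cnj (y k $ i) * y k $ i))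
      = (\<Sum>k<L. \<Sum>n<p. \<Sum>i<p. of_real s / of_nat p * ((cnj (u$i) * u$i) * (V k $ n * cnj (W k $ i) * W k $ i * cnj (V k $ n))))"
    proof (rule sum.cong[OF refl])
      fix k assume k: "k \<in> {..<L}"
      have "of_real s * ntr p (outer (V k)) * (\<Sum>i<p. cnj (y k $ i) * y k $ i)
        = of_real s / of_nat p * ((\<Sum>n<p. V k $ n * cnj (V k $ n)) * (\<Sum>i<p. cnj (y k $ i) * y k $ i))"
        using ntr_outer[OF Vc] k by simp
      also have "\<dots> = of_real s / of_nat p * (\<Sum>n<p. \<Sum>i<p. (V k $ n * cnj (V k $ n)) * (cnj (y k $ i) * y k $ i))"
        by (simp add: sum_product)
      also have "\<dots> = (\<Sum>n<p. \<Sum>i<p. of_real s / of_nat p * ((cnj (u$i) * u$i) * (V k $ n * cnj (W k $ i) * W k $ i * cnj (V k $ n))))"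
        unfolding sum_distrib_left by (intro sum.cong refl) (simp add: y_def algebra_simps)
      finally show "of_real s * ntr p (outer (V k)) * (\<Sum>i<p. cnj (y k $ i) * y k $ i)
        = (\<Sum>n<p. \<Sum>i<p. of_real s / of_nat p * ((cnj (u$i) * u$i) * (V k $ n * cnj (W k $ i) * W k $ i * cnj (V k $ n))))" .
    qed
    also have "\<dots> = (\<Sum>n<p. \<Sum>i<p. \<Sum>k<L. of_real s / of_nat p * ((cnj (u$i) * u$i) * (V k $ n * cnj (W k $ i) * W k $ i * cnj (V k $ n))))"
      by (rule swap3)
    also have "\<dots> = (\<Sum>n<p. \<Sum>i<p. of_real s / of_nat p * ((cnj (u$i) * u$i) * (of_real t / of_nat p)))"
    proof (intro sum.cong refl)
      fix n i assume ni: "n \<in> {..<p}" "i \<in> {..<p}"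
      have h: "(\<Sum>k<L. V k $ n * cnj (W k $ i) * W k $ i * cnj (V k $ n)) = of_real t / of_nat p"
        using T[of i i n n] ni af(3) by auto
      show "(\<Sum>k<L. of_real s / of_nat p * ((cnj (u$i) * u$i) * (V k $ n * cnj (W k $ i) * W k $ i * cnj (V k $ n))))
         = of_real s / of_nat p * ((cnj (u$i) * u$i) * (of_real t / of_nat p))"
        by (simp only: sum_distrib_left[symmetric] h)
    qed
    also have "\<dots> = of_real s * of_real t / of_nat p * (\<Sum>i<p. cnj (u$i) * u$i)"
      using p by (simp add: sum_distrib_left sum_distrib_right field_simps)
    also have "\<dots> = of_real s * of_real t / of_nat p * of_real (nsq u)"
      using sum_cnj_nsq[of u] u(1) by simp
    finally show ?thesis .
  qed
  also have "(\<Sum>k<L. \<Sum>l<p. \<Sum>m<p. cnj (y k $ l) * (A$$(l,m) * outer (V k) $$ (l,m)) * y k $ m)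
      = c * of_real (nsq u)"
  proof -
    have "(\<Sum>k<L. \<Sum>l<p. \<Sum>m<p. cnj (y k $ l) * (A$$(l,m) * outer (V k) $$ (l,m)) * y k $ m)
      = (\<Sum>k<L. \<Sum>l<p. \<Sum>m<p. (cnj (u$l) * A$$(l,m) * u$m) * (V k $ l * cnj (W k $ l) * W k $ m * cnj (V k $ m)))"
      using Vd by (intro sum.cong refl) (auto simp: y_def outer_def algebra_simps)
    also have "\<dots> = (\<Sum>l<p. \<Sum>m<p. \<Sum>k<L. (cnj (u$l) * A$$(l,m) * u$m) * (V k $ l * cnj (W k $ l) * W k $ m * cnj (V k $ m)))"
      by (rule swap3)
    also have "\<dots> = (\<Sum>l<p. \<Sum>m<p. cnj (u$l) * A$$(l,m) * u$m)"
    proof (intro sum.cong refl)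
      fix l m assume lm: "l \<in> {..<p}" "m \<in> {..<p}"
      have h1: "(\<Sum>k<L. V k $ l * cnj (W k $ l) * W k $ m * cnj (V k $ m))
         = (if l = m then of_real t / of_nat p else 0) + A$$(l,m)"
        using T[of l m l m] lm by auto
      have h2: "A$$(l,m) * ((if l = m then of_real t / of_nat p else 0) + A$$(l,m)) = A$$(l,m)"
        using af(3) af(7) lm by auto
      have "(\<Sum>k<L. (cnj (u$l) * A$$(l,m) * u$m) * (V k $ l * cnj (W k $ l) * W k $ m * cnj (V k $ m)))
         = (cnj (u$l) * A$$(l,m) * u$m) * (\<Sum>k<L. V k $ l * cnj (W k $ l) * W k $ m * cnj (V k $ m))"
        by (rule sum_distrib_left[symmetric])
      also have "\<dots> = cnj (u$l) * (A$$(l,m) * ((if l = m then of_real t / of_nat p else 0) + A$$(l,m))) * u$m"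
        unfolding h1 by (simp only: mult_ac)
      also have "\<dots> = cnj (u$l) * A$$(l,m) * u$m" unfolding h2 ..
      finally show "(\<Sum>k<L. (cnj (u$l) * A$$(l,m) * u$m) * (V k $ l * cnj (W k $ l) * W k $ m * cnj (V k $ m)))
         = cnj (u$l) * A$$(l,m) * u$m" .
    qed
    also have "\<dots> = qf A u" unfolding qf_def using u(1) by simp
    also have "\<dots> = c * of_real (nsq u)" using qf_eig[OF u(1) u(3)] .
    finally show ?thesis .
  qed
  finally have "0 \<le> (s * t / real p + Re c) * nsq u" by (simp add: algebra_simps)
  then have "0 \<le> s * t / real p + Re c" using u(2) by (simp add: zero_le_mult_iff)
  then have "- Re c \<le> s * t / real p" by simp
  then have "- real p * Re c \<le> s * t" using p by (simp add: field_simps)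
  then show ?thesis using c(2) by simp
qed



lemma lmax_nonneg: assumes adj: "adjacency_matrix p A" and p: "0 < p" shows "0 \<le> lambda_max A"
proof -
  note af = adj_facts[OF adj]
  have "Re (qf A (unit_vec p 0)) \<le> lambda_max A * nsq (unit_vec p 0)"
    using lambda_max_props(2)[OF af(1) af(5) p] by simp
  moreover have "qf A (unit_vec p 0) = 0" using qf_unit[OF af(1) p] af(3)[OF p] by simp
  moreover have "nsq (unit_vec p 0) = 1" using p by (rule nsq_unit)
  ultimately show ?thesis by simp
qed

theorem mainTheorem11:
  fixes p :: nat and A :: "complex mat"
  assumes "adjacency_matrix p A"
    and "edges p A \<noteq> {}"
  shows "t_pos p A \<ge> Max {1, - lambda_min A,
            - real p * lambda_min A / real (card (edges p A)),
            - real p * lambda_min A / t_eb p A,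
            lambda_max A / (theta_compl p A - 1)}"
proof -
  note adj = assms(1)
  note af = adj_facts[OF adj]
  obtain i0 j0 where e: "i0 < p" "j0 < p" "A$$(i0,j0) = 1" using assms(2) unfolding edges_def by auto
  have ij: "i0 \<noteq> j0" using af(3)[OF e(1)] e(3) by auto
  have p: "0 < p" using e by auto
  have p2: "2 \<le> p" using e ij by auto
  define Spos where "Spos = {t. positive_map p (gamma_map p A t)}"
  define Seb where "Seb = {t. entanglement_breaking p (gamma_map p A t)}"
  have tp: "t_pos p A = Inf Spos" unfolding t_pos_def Spos_def ..
  have te: "t_eb p A = Inf Seb" unfolding t_eb_def Seb_def ..
  have eb0: "real p * real p \<in> Seb" unfolding Seb_def using eb_exists[OF adj p] by simp
  have sub: "Seb \<subseteq> Spos" unfolding Seb_def Spos_def using eb_pos[OF adj] by auto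
  have Sne: "Spos \<noteq> {}" using eb0 sub by auto
  have Ene: "Seb \<noteq> {}" using eb0 by auto
  have sp2: "real p / 2 \<le> s" if "s \<in> Spos" for s
    using edge_test[OF adj e] that unfolding Spos_def by simp
  have s1: "1 \<le> s" if "s \<in> Spos" for s using sp2[OF that] p2 by simp
  have b1: "1 \<le> t_pos p A" unfolding tp using Sne s1 by (rule cInf_greatest)
  have b2: "- lambda_min A \<le> t_pos p A" unfolding tp
    using Sne J_test[OF adj p] unfolding Spos_def by (intro cInf_greatest) auto
  have b3: "- real p * lambda_min A / real (card (edges p A)) \<le> t_pos p A"
  proof -
    have fin: "finite (edges p A)"
      by (rule finite_subset[of _ "{..<p} \<times> {..<p}"]) (auto simp: edges_def)
    then have cpos: "0 < real (card (edges p A))" using assms(2) by (simp add: card_gt_0_iff)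
    have "- lambda_min A \<le> real (card (edges p A)) / 2" by (rule deg_bound[OF adj p])
    then have "real p * (- lambda_min A) \<le> real p * (real (card (edges p A)) / 2)"
      by (intro mult_left_mono) auto
    then have "- real p * lambda_min A / real (card (edges p A)) \<le> real p / 2"
      using cpos by (simp add: divide_le_eq field_simps)
    also have "real p / 2 \<le> t_pos p A" unfolding tp using Sne sp2 by (rule cInf_greatest)
    finally show ?thesis .
  qed
  have b4: "- real p * lambda_min A / t_eb p A \<le> t_pos p A"
  proof -
    define N where "N = - real p * lambda_min A"
    have key: "N \<le> s * t" if "s \<in> Spos" "t \<in> Seb" for s t
      using eb_test[OF adj p] that unfolding N_def Spos_def Seb_def by simp
    have teb1: "1 \<le> t_eb p A" unfolding te using Ene s1 sub by (intro cInf_greatest) auto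
    have "N / t_pos p A \<le> t" if t: "t \<in> Seb" for t
    proof -
      have t1: "1 \<le> t" using s1 sub t by auto
      have "N / t \<le> t_pos p A" unfolding tp
      proof (rule cInf_greatest[OF Sne])
        fix s assume "s \<in> Spos"
        then have "N \<le> s * t" using key t by blast
        then show "N / t \<le> s" using t1 by (simp add: divide_le_eq)
      qed
      then have "N \<le> t_pos p A * t" using t1 by (simp add: divide_le_eq)
      then show ?thesis using b1 by (simp add: divide_le_eq mult.commute)
    qed
    then have "N / t_pos p A \<le> t_eb p A" unfolding te using Ene by (intro cInf_greatest) auto
    then have "N \<le> t_eb p A * t_pos p A" using b1 by (simp add: divide_le_eq)
    then show ?thesis unfolding N_def[symmetric] using teb1 by (simp add: divide_le_eq mult.commute)
  qed
  have b5: "lambda_max A / (theta_compl p A - 1) \<le> t_pos p A"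
  proof -
    define \<Theta> where "\<Theta> = {lambda_max H | H. H \<in> carrier_mat p p \<and> self_adjoint H \<and>
      (\<forall>i<p. H $$ (i, i) = 1) \<and> (\<forall>i<p. \<forall>j<p. A $$ (i, j) = 1 \<longrightarrow> H $$ (i, j) = 1)}"
    have th: "theta_compl p A = Inf \<Theta>" unfolding theta_compl_def \<Theta>_def ..
    have l0: "0 \<le> lambda_max A" by (rule lmax_nonneg[OF adj p])
    show ?thesis
    proof (cases "theta_compl p A \<le> 1")
      case True
      then have "lambda_max A / (theta_compl p A - 1) \<le> 0" using l0 by (intro divide_nonneg_nonpos) auto
      then show ?thesis using b1 by simp
    next
      case False
      then have tg: "theta_compl p A - 1 > 0" by simp
      define J where "J = mat p p (\<lambda>_. 1::complex)"
      have J: "J \<in> carrier_mat p p" unfolding J_def by simp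
      have "self_adjoint J" using self_adjoint_iff[OF J] unfolding J_def by simp
      then have "lambda_max J \<in> \<Theta>" unfolding \<Theta>_def using J by (auto simp: J_def)
      then have Tne: "\<Theta> \<noteq> {}" by auto
      show ?thesis unfolding tp
      proof (rule cInf_greatest[OF Sne])
        fix s assume s: "s \<in> Spos"
        have s0: "0 < s" using s1[OF s] by simp
        have "1 + lambda_max A / s \<le> x" if xT: "x \<in> \<Theta>" for x
        proof -
          obtain H where H: "x = lambda_max H" "H \<in> carrier_mat p p" "self_adjoint H"
            "\<forall>i<p. H $$ (i, i) = 1" "\<forall>i<p. \<forall>j<p. A $$ (i, j) = 1 \<longrightarrow> H $$ (i, j) = 1"
            using xT unfolding \<Theta>_def by blast
          have "lambda_max A \<le> s * (x - 1)"
            using theta_test[OF adj p _ H(2-5)] s H(1) unfolding Spos_def by simp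
          then have "lambda_max A / s \<le> x - 1" using s0 by (simp add: divide_le_eq mult.commute)
          then show ?thesis by simp
        qed
        then have "1 + lambda_max A / s \<le> theta_compl p A" unfolding th using Tne by (intro cInf_greatest) auto
        then have "lambda_max A / s \<le> theta_compl p A - 1" by simp
        then have "lambda_max A \<le> s * (theta_compl p A - 1)" using s0 by (simp add: divide_le_eq mult.commute)
        then show "lambda_max A / (theta_compl p A - 1) \<le> s" using tg by (simp add: divide_le_eq)
      qed
    qed
  qed
  show ?thesis using b1 b2 b3 b4 b5 by simp
qed


end
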